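(* Let $(\mathcal{E},\mathcal{L},\mathcal{B})$ be a weakly left resolving labelled space whose accommodating family $\mathcal{B}$ is closed under relative complements, and let $S$ be its associated inverse semigroup. Then a filter $\xi$ in $E(S)$ with word $\alpha$ is tight if and only if either (i) $\xi$ is of infinite type and is an ultrafilter; or (ii) $\xi$ is of finite type, $\xi_{|\alpha|}$ is an ultrafilter in $\mathcal{B}_\alpha$, and for each $A\in\xi_{|\alpha|}$ at least one of the following holds: (a) $\mathcal{L}(A\mathcal{E}^1)$ is infinite; (b) there exists $B\in\mathcal{B}_\alpha$ with $\emptyset\neq B\subseteq A\cap\mathcal{E}^0_{sink}$.
   Context: A directed graph $\mathcal{E}=(\mathcal{E}^0,\mathcal{E}^1,r,s)$ has countable nonempty vertex set, edge set, range/source maps; paths satisfy $r(\lambda_i)=s(\lambda_{i+1})$. A vertex $v$ is a sink if $s^{-1}(v)=\emptyset$; $\mathcal{E}^0_{sink}$ is the set of sinks. A labelled graph over the alphabet $\mathcal{A}$ has a surjective labelling $\mathcal{L}:\mathcal{E}^1\to\mathcal{A}$ extended letterwise to finite and infinite paths; for $A\subseteq\mathcal{E}^0$, $\mathcal{L}(A\mathcal{E}^1)=\{\mathcal{L}(e): e\in\mathcal{E}^1,\ s(e)\in A\}$. $\omega$ is the empty word, $\mathcal{L}^+=\bigcup_{n\ge1}\mathcal{L}(\mathcal{E}^n)$, $\mathcal{L}^*=\{\omega\}\cup\mathcal{L}^+$, $\mathcal{L}^\infty$ the labels of infinite paths; $\alpha_{i,j}=\alpha_i\cdots\alpha_j$,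 $\alpha_{1,0}=\omega$. For $A\subseteq\mathcal{E}^0$, $\alpha\in\mathcal{L}^+$: $r(A,\alpha)=\{r(\lambda):\mathcal{L}(\lambda)=\alpha,\ s(\lambda)\in A\}$, $r(A,\omega)=A$, $r(\alpha)=r(\mathcal{E}^0,\alpha)$. $\mathcal{B}$ accommodating: closed under $r(\cdot,\alpha)$, finite intersections and unions, contains $r(\alpha)$ for $\alpha\in\mathcal{L}^+$; labelled space weakly left resolving if $r(A\cap B,\alpha)=r(A,\alpha)\cap r(B,\alpha)$ for $A,B\in\mathcal{B}$, $\alpha\in\mathcal{L}^+$. $\mathcal{B}_\alpha=\mathcal{B}\cap\mathcal{P}(r(\alpha))$, $\mathcal{B}_\omega=\mathcal{B}$. $S$ = triples $(\alpha,A,\beta)$, $\alpha,\beta\in\mathcal{L}^*$, $\emptyset\ne A\in\mathcal{B}_\alpha\cap\mathcal{B}_\beta$, plus $0$; product $(\alpha,A,\beta)(\gamma,B,\delta)=(\alpha\gamma',r(A,\gamma')\cap B,\delta)$ if $\gamma=\beta\gamma'$, $=(\alpha,A\cap r(B,\beta'),\delta\beta')$ if $\beta=\gamma\beta'$, $=0$ otherwise (empty middle entry identified with $0$). $E(S)=\{(\alpha,A,\alpha)\}\cup\{0\}$, $p\le q$ iff $pq=p$. A filter in a poset with least element $0$ is a nonempty upward-closed subset not containing $0$ in which any two elements have a common lower bound in it; an ultrafilter is a maximal filter; filters in $\mathcal{B}_\alpha$ are under inclusion. The words of elements of a filter $\xi$ in $E(S)$ are pairwise comparable; if there is a longest one,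 it is the word $\alpha\in\mathcal{L}^*$ of $\xi$ (finite type), otherwise $\xi$ is of infinite type and its word is the unique $\alpha\in\mathcal{L}^\infty$ such that all elements of $\xi$ are of the form $(\alpha_{1,n},A,\alpha_{1,n})$. $\xi_n=\{A\in\mathcal{B}:(\alpha_{1,n},A,\alpha_{1,n})\in\xi\}$. For $x\in E(S)$, $Z\subseteq\{y:y\le x\}$ is a cover of $x$ if every nonzero $y\le x$ has $zy\neq0$ for some $z\in Z$; a filter $\xi$ is tight if $Z\cap\xi\neq\emptyset$ for every $x\in\xi$ and every finite cover $Z$ of $x$. *)

theory Defs
  imports Main "HOL-Library.Countable_Set" "HOL-Library.Sublist"
begin

text \<open>A directed graph: vertex set = UNIV :: 'v set (countable, nonempty as a type),
edge set Ed :: 'e set (countable), range r, source s. Labelling lab restricted to Ed;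
the alphabet is lab ` Ed (so the labelling is surjective by construction).
Words are lists; the empty word omega is [].\<close>

definition fpaths :: "'e set \<Rightarrow> ('e \<Rightarrow> 'v) \<Rightarrow> ('e \<Rightarrow> 'v) \<Rightarrow> 'e list set" where
  "fpaths Ed r s = {p. p \<noteq> [] \<and> set p \<subseteq> Ed \<and>
       (\<forall>i. Suc i < length p \<longrightarrow> r (p ! i) = s (p ! Suc i))}"

definition Lplus :: "'e set \<Rightarrow> ('e \<Rightarrow> 'v) \<Rightarrow> ('e \<Rightarrow> 'v) \<Rightarrow> ('e \<Rightarrow> 'a) \<Rightarrow> 'a list set" where
  "Lplus Ed r s lab = map lab ` fpaths Ed r s"

definition Lstar :: "'e set \<Rightarrow> ('e \<Rightarrow> 'v) \<Rightarrow> ('e \<Rightarrow> 'v) \<Rightarrow> ('e \<Rightarrow> 'a) \<Rightarrow> 'a list set" where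
  "Lstar Ed r s lab = insert [] (Lplus Ed r s lab)"

definition rel_range :: "'e set \<Rightarrow> ('e \<Rightarrow> 'v) \<Rightarrow> ('e \<Rightarrow> 'v) \<Rightarrow> ('e \<Rightarrow> 'a) \<Rightarrow> 'v set \<Rightarrow> 'a list \<Rightarrow> 'v set" where
  "rel_range Ed r s lab A \<alpha> =
     (if \<alpha> = [] then A
      else {r (last p) | p. p \<in> fpaths Ed r s \<and> map lab p = \<alpha> \<and> s (hd p) \<in> A})"

definition rng :: "'e set \<Rightarrow> ('e \<Rightarrow> 'v) \<Rightarrow> ('e \<Rightarrow> 'v) \<Rightarrow> ('e \<Rightarrow> 'a) \<Rightarrow> 'a list \<Rightarrow> 'v set" where
  "rng Ed r s lab \<alpha> = rel_range Ed r s lab UNIV \<alpha>"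

definition accommodating :: "'e set \<Rightarrow> ('e \<Rightarrow> 'v) \<Rightarrow> ('e \<Rightarrow> 'v) \<Rightarrow> ('e \<Rightarrow> 'a) \<Rightarrow> 'v set set \<Rightarrow> bool" where
  "accommodating Ed r s lab B \<longleftrightarrow>
     (\<forall>A\<in>B. \<forall>\<alpha>\<in>Lplus Ed r s lab. rel_range Ed r s lab A \<alpha> \<in> B) \<and>
     (\<forall>A\<in>B. \<forall>C\<in>B. A \<inter> C \<in> B \<and> A \<union> C \<in> B) \<and>
     (\<forall>\<alpha>\<in>Lplus Ed r s lab. rng Ed r s lab \<alpha> \<in> B)"

definition weakly_left_resolving :: "'e set \<Rightarrow> ('e \<Rightarrow> 'v) \<Rightarrow> ('e \<Rightarrow> 'v) \<Rightarrow> ('e \<Rightarrow> 'a) \<Rightarrow> 'v set set \<Rightarrow> bool" where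
  "weakly_left_resolving Ed r s lab B \<longleftrightarrow>
     (\<forall>A\<in>B. \<forall>C\<in>B. \<forall>\<alpha>\<in>Lplus Ed r s lab.
        rel_range Ed r s lab (A \<inter> C) \<alpha> = rel_range Ed r s lab A \<alpha> \<inter> rel_range Ed r s lab C \<alpha>)"

definition closed_rel_compl :: "'v set set \<Rightarrow> bool" where
  "closed_rel_compl B \<longleftrightarrow> (\<forall>A\<in>B. \<forall>C\<in>B. A - C \<in> B)"

definition Bsub :: "'e set \<Rightarrow> ('e \<Rightarrow> 'v) \<Rightarrow> ('e \<Rightarrow> 'v) \<Rightarrow> ('e \<Rightarrow> 'a) \<Rightarrow> 'v set set \<Rightarrow> 'a list \<Rightarrow> 'v set set" where
  "Bsub Ed r s lab B \<alpha> = (if \<alpha> = [] then B else {A \<in> B. A \<subseteq> rng Ed r s lab \<alpha>})"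

text \<open>Elements of S: None is 0, Some (alpha, A, beta) is the triple.\<close>
type_synonym ('a,'v) selem = "('a list \<times> 'v set \<times> 'a list) option"

definition Sset :: "'e set \<Rightarrow> ('e \<Rightarrow> 'v) \<Rightarrow> ('e \<Rightarrow> 'v) \<Rightarrow> ('e \<Rightarrow> 'a) \<Rightarrow> 'v set set \<Rightarrow> ('a,'v) selem set" where
  "Sset Ed r s lab B = insert None
     {Some (\<alpha>, A, \<beta>) | \<alpha> A \<beta>. \<alpha> \<in> Lstar Ed r s lab \<and> \<beta> \<in> Lstar Ed r s lab \<and> A \<noteq> {} \<and>
         A \<in> Bsub Ed r s lab B \<alpha> \<and> A \<in> Bsub Ed r s lab B \<beta>}"

definition mk :: "'a list \<Rightarrow> 'v set \<Rightarrow> 'a list \<Rightarrow> ('a,'v) selem" where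
  "mk \<alpha> A \<beta> = (if A = {} then None else Some (\<alpha>, A, \<beta>))"

fun smult :: "'e set \<Rightarrow> ('e \<Rightarrow> 'v) \<Rightarrow> ('e \<Rightarrow> 'v) \<Rightarrow> ('e \<Rightarrow> 'a) \<Rightarrow> ('a,'v) selem \<Rightarrow> ('a,'v) selem \<Rightarrow> ('a,'v) selem" where
  "smult Ed r s lab None q = None"
| "smult Ed r s lab (Some p) None = None"
| "smult Ed r s lab (Some (\<alpha>, A, \<beta>)) (Some (\<gamma>, C, \<delta>)) =
     (if prefix \<beta> \<gamma> then
        (let \<gamma>' = drop (length \<beta>) \<gamma> in mk (\<alpha> @ \<gamma>') (rel_range Ed r s lab A \<gamma>' \<inter> C) \<delta>)
      else if prefix \<gamma> \<beta> then
        (let \<beta>' = drop (length \<gamma>) \<beta> in mk \<alpha> (A \<inter> rel_range Ed r s lab C \<beta>') (\<delta> @ \<beta>'))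
      else None)"

definition ES :: "'e set \<Rightarrow> ('e \<Rightarrow> 'v) \<Rightarrow> ('e \<Rightarrow> 'v) \<Rightarrow> ('e \<Rightarrow> 'a) \<Rightarrow> 'v set set \<Rightarrow> ('a,'v) selem set" where
  "ES Ed r s lab B = insert None
     {Some (\<alpha>, A, \<alpha>) | \<alpha> A. \<alpha> \<in> Lstar Ed r s lab \<and> A \<noteq> {} \<and> A \<in> Bsub Ed r s lab B \<alpha>}"

definition sleq :: "'e set \<Rightarrow> ('e \<Rightarrow> 'v) \<Rightarrow> ('e \<Rightarrow> 'v) \<Rightarrow> ('e \<Rightarrow> 'a) \<Rightarrow> ('a,'v) selem \<Rightarrow> ('a,'v) selem \<Rightarrow> bool" where
  "sleq Ed r s lab p q \<longleftrightarrow> smult Ed r s lab p q = p"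

definition filterE :: "'e set \<Rightarrow> ('e \<Rightarrow> 'v) \<Rightarrow> ('e \<Rightarrow> 'v) \<Rightarrow> ('e \<Rightarrow> 'a) \<Rightarrow> 'v set set \<Rightarrow> ('a,'v) selem set \<Rightarrow> bool" where
  "filterE Ed r s lab B \<xi> \<longleftrightarrow>
     \<xi> \<subseteq> ES Ed r s lab B \<and> \<xi> \<noteq> {} \<and> None \<notin> \<xi> \<and>
     (\<forall>x\<in>\<xi>. \<forall>y\<in>ES Ed r s lab B. sleq Ed r s lab x y \<longrightarrow> y \<in> \<xi>) \<and>
     (\<forall>x\<in>\<xi>. \<forall>y\<in>\<xi>. \<exists>z\<in>\<xi>. sleq Ed r s lab z x \<and> sleq Ed r s lab z y)"

definition ultrafilterE :: "'e set \<Rightarrow> ('e \<Rightarrow> 'v) \<Rightarrow> ('e \<Rightarrow> 'v) \<Rightarrow> ('e \<Rightarrow> 'a) \<Rightarrow> 'v set set \<Rightarrow> ('a,'v) selem set \<Rightarrow> bool" where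
  "ultrafilterE Ed r s lab B \<xi> \<longleftrightarrow> filterE Ed r s lab B \<xi> \<and>
     (\<forall>\<eta>. filterE Ed r s lab B \<eta> \<and> \<xi> \<subseteq> \<eta> \<longrightarrow> \<eta> = \<xi>)"

definition set_filter :: "'v set set \<Rightarrow> 'v set set \<Rightarrow> bool" where
  "set_filter F \<phi> \<longleftrightarrow> \<phi> \<subseteq> F \<and> \<phi> \<noteq> {} \<and> {} \<notin> \<phi> \<and>
     (\<forall>A\<in>\<phi>. \<forall>C\<in>F. A \<subseteq> C \<longrightarrow> C \<in> \<phi>) \<and>
     (\<forall>A\<in>\<phi>. \<forall>C\<in>\<phi>. \<exists>D\<in>\<phi>. D \<subseteq> A \<and> D \<subseteq> C)"

definition set_ultrafilter :: "'v set set \<Rightarrow> 'v set set \<Rightarrow> bool" where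
  "set_ultrafilter F \<phi> \<longleftrightarrow> set_filter F \<phi> \<and> (\<forall>\<psi>. set_filter F \<psi> \<and> \<phi> \<subseteq> \<psi> \<longrightarrow> \<psi> = \<phi>)"

definition filter_words :: "('a,'v) selem set \<Rightarrow> 'a list set" where
  "filter_words \<xi> = {\<alpha>. \<exists>A. Some (\<alpha>, A, \<alpha>) \<in> \<xi>}"

definition finite_type_word :: "('a,'v) selem set \<Rightarrow> 'a list \<Rightarrow> bool" where
  "finite_type_word \<xi> \<alpha> \<longleftrightarrow> \<alpha> \<in> filter_words \<xi> \<and> (\<forall>\<beta>\<in>filter_words \<xi>. length \<beta> \<le> length \<alpha>)"

definition infinite_type :: "('a,'v) selem set \<Rightarrow> bool" where
  "infinite_type \<xi> \<longleftrightarrow> \<not> (\<exists>\<alpha>. finite_type_word \<xi> \<alpha>)"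

definition xi_at :: "'v set set \<Rightarrow> ('a,'v) selem set \<Rightarrow> 'a list \<Rightarrow> nat \<Rightarrow> 'v set set" where
  "xi_at B \<xi> \<alpha> n = {A \<in> B. Some (take n \<alpha>, A, take n \<alpha>) \<in> \<xi>}"

definition is_cover :: "'e set \<Rightarrow> ('e \<Rightarrow> 'v) \<Rightarrow> ('e \<Rightarrow> 'v) \<Rightarrow> ('e \<Rightarrow> 'a) \<Rightarrow> 'v set set \<Rightarrow> ('a,'v) selem \<Rightarrow> ('a,'v) selem set \<Rightarrow> bool" where
  "is_cover Ed r s lab B x Z \<longleftrightarrow>
     Z \<subseteq> {y \<in> ES Ed r s lab B. sleq Ed r s lab y x} \<and>
     (\<forall>y\<in>ES Ed r s lab B. y \<noteq> None \<and> sleq Ed r s lab y x \<longrightarrow> (\<exists>z\<in>Z. smult Ed r s lab z y \<noteq> None))"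

definition tight :: "'e set \<Rightarrow> ('e \<Rightarrow> 'v) \<Rightarrow> ('e \<Rightarrow> 'v) \<Rightarrow> ('e \<Rightarrow> 'a) \<Rightarrow> 'v set set \<Rightarrow> ('a,'v) selem set \<Rightarrow> bool" where
  "tight Ed r s lab B \<xi> \<longleftrightarrow>
     (\<forall>x\<in>\<xi>. \<forall>Z. finite Z \<and> is_cover Ed r s lab B x Z \<longrightarrow> Z \<inter> \<xi> \<noteq> {})"

definition sinks :: "'e set \<Rightarrow> ('e \<Rightarrow> 'v) \<Rightarrow> 'v set" where
  "sinks Ed s = {v. \<forall>e\<in>Ed. s e \<noteq> v}"

definition out_labels :: "'e set \<Rightarrow> ('e \<Rightarrow> 'v) \<Rightarrow> ('e \<Rightarrow> 'a) \<Rightarrow> 'v set \<Rightarrow> 'a set" where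
  "out_labels Ed s lab A = lab ` {e \<in> Ed. s e \<in> A}"

end

theory Submission
  imports Defs
begin

definition step :: "'e set \<Rightarrow> ('e \<Rightarrow> 'v) \<Rightarrow> ('e \<Rightarrow> 'v) \<Rightarrow> ('e \<Rightarrow> 'a) \<Rightarrow> 'v set \<Rightarrow> 'a \<Rightarrow> 'v set" where
  "step Ed r s lab A a = {r e |e. e \<in> Ed \<and> lab e = a \<and> s e \<in> A}"

fun RR :: "'e set \<Rightarrow> ('e \<Rightarrow> 'v) \<Rightarrow> ('e \<Rightarrow> 'v) \<Rightarrow> ('e \<Rightarrow> 'a) \<Rightarrow> 'v set \<Rightarrow> 'a list \<Rightarrow> 'v set" where
  "RR Ed r s lab A [] = A"
| "RR Ed r s lab A (a # w) = RR Ed r s lab (step Ed r s lab A a) w"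

lemma fpaths_single: "[e] \<in> fpaths Ed r s \<longleftrightarrow> e \<in> Ed"
  by (auto simp: fpaths_def)

lemma fpaths_Cons: "q \<noteq> [] \<Longrightarrow> (e # q \<in> fpaths Ed r s) \<longleftrightarrow> e \<in> Ed \<and> r e = s (hd q) \<and> q \<in> fpaths Ed r s"
proof -
  assume q: "q \<noteq> []"
  have "(\<forall>i. Suc i < length (e#q) \<longrightarrow> r ((e#q)!i) = s ((e#q)!Suc i)) \<longleftrightarrow>
        r e = s (hd q) \<and> (\<forall>i. Suc i < length q \<longrightarrow> r (q!i) = s (q!Suc i))"
  proof
    assume H: "\<forall>i. Suc i < length (e#q) \<longrightarrow> r ((e#q)!i) = s ((e#q)!Suc i)"
    have "r e = s (hd q)" using H[rule_format, of 0] q by (simp add: hd_conv_nth)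
    moreover have "\<forall>i. Suc i < length q \<longrightarrow> r (q!i) = s (q!Suc i)"
      using H by (metis Suc_less_eq length_Cons nth_Cons_Suc)
    ultimately show "r e = s (hd q) \<and> (\<forall>i. Suc i < length q \<longrightarrow> r (q!i) = s (q!Suc i))" by blast
  next
    assume H: "r e = s (hd q) \<and> (\<forall>i. Suc i < length q \<longrightarrow> r (q!i) = s (q!Suc i))"
    show "\<forall>i. Suc i < length (e#q) \<longrightarrow> r ((e#q)!i) = s ((e#q)!Suc i)"
    proof (intro allI impI)
      fix i assume "Suc i < length (e#q)"
      then show "r ((e#q)!i) = s ((e#q)!Suc i)" using H q
        by (cases i) (auto simp: hd_conv_nth)
    qed
  qed
  then show ?thesis using q unfolding fpaths_def by auto
qed

lemma rel_range_RR: "rel_range Ed r s lab A w = RR Ed r s lab A w"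
proof (induction w arbitrary: A)
  case Nil then show ?case by (simp add: rel_range_def)
next
  case (Cons a w)
  show ?case
  proof (cases "w = []")
    case True
    have "rel_range Ed r s lab A [a] = step Ed r s lab A a"
    proof
      show "rel_range Ed r s lab A [a] \<subseteq> step Ed r s lab A a"
      proof
        fix v assume "v \<in> rel_range Ed r s lab A [a]"
        then obtain p where p: "p \<in> fpaths Ed r s" "map lab p = [a]" "s (hd p) \<in> A" "v = r (last p)"
          by (auto simp: rel_range_def)
        then obtain e where "p = [e]" by (cases p) auto
        then show "v \<in> step Ed r s lab A a" using p by (auto simp: step_def fpaths_single)
      qed
    next
      show "step Ed r s lab A a \<subseteq> rel_range Ed r s lab A [a]"
      proof
        fix v assume "v \<in> step Ed r s lab A a"
        then obtain e where e: "e \<in> Ed" "lab e = a" "s e \<in> A" "v = r e" by (auto simp: step_def)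
        then have "[e] \<in> fpaths Ed r s" by (simp add: fpaths_single)
        then show "v \<in> rel_range Ed r s lab A [a]" using e unfolding rel_range_def
          by (auto intro!: exI[of _ "[e]"])
      qed
    qed
    then show ?thesis using True by simp
  next
    case False
    have "rel_range Ed r s lab A (a#w) = rel_range Ed r s lab (step Ed r s lab A a) w"
    proof
      show "rel_range Ed r s lab A (a#w) \<subseteq> rel_range Ed r s lab (step Ed r s lab A a) w"
      proof
        fix v assume "v \<in> rel_range Ed r s lab A (a#w)"
        then obtain p where p: "p \<in> fpaths Ed r s" "map lab p = a#w" "s (hd p) \<in> A" "v = r (last p)"
          by (auto simp: rel_range_def)
        from p(2) obtain e q where eq0: "p = e # q" "lab e = a" "map lab q = w"
          by (auto simp: map_eq_Cons_conv)
        then have eq: "p = e # q" "q \<noteq> []" "map lab q = w" "lab e = a" using False by auto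
        then have "e \<in> Ed" "r e = s (hd q)" "q \<in> fpaths Ed r s" using fpaths_Cons[OF eq(2), of e Ed r s] p(1) eq(1) by simp_all
        then have "s (hd q) \<in> step Ed r s lab A a" using p eq unfolding step_def by (metis (mono_tags, lifting) list.sel(1) mem_Collect_eq)
        then show "v \<in> rel_range Ed r s lab (step Ed r s lab A a) w"
          using False eq p \<open>q \<in> fpaths Ed r s\<close> unfolding rel_range_def by auto
      qed
    next
      show "rel_range Ed r s lab (step Ed r s lab A a) w \<subseteq> rel_range Ed r s lab A (a#w)"
      proof
        fix v assume "v \<in> rel_range Ed r s lab (step Ed r s lab A a) w"
        then obtain q where q: "q \<in> fpaths Ed r s" "map lab q = w" "s (hd q) \<in> step Ed r s lab A a" "v = r (last q)"
          using False by (auto simp: rel_range_def)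
        then obtain e where e: "e \<in> Ed" "lab e = a" "s e \<in> A" "r e = s (hd q)" by (auto simp: step_def)
        have qne: "q \<noteq> []" using q False by auto
        then have "e # q \<in> fpaths Ed r s" using fpaths_Cons[OF qne, of e Ed r s] e q by simp
        then show "v \<in> rel_range Ed r s lab A (a#w)" using e q qne unfolding rel_range_def
          by (auto intro!: exI[of _ "e#q"])
      qed
    qed
    then show ?thesis using Cons by simp
  qed
qed

lemma Lplus_RR: "w \<in> Lplus Ed r s lab \<longleftrightarrow> w \<noteq> [] \<and> RR Ed r s lab UNIV w \<noteq> {}"
proof
  assume "w \<in> Lplus Ed r s lab"
  then obtain p where p: "p \<in> fpaths Ed r s" "map lab p = w" by (auto simp: Lplus_def)
  then have "p \<noteq> []" by (simp add: fpaths_def)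
  then have "w \<noteq> []" using p by auto
  moreover have "r (last p) \<in> rel_range Ed r s lab UNIV w" using p \<open>w \<noteq> []\<close> by (auto simp: rel_range_def)
  ultimately show "w \<noteq> [] \<and> RR Ed r s lab UNIV w \<noteq> {}" by (auto simp: rel_range_RR)
next
  assume "w \<noteq> [] \<and> RR Ed r s lab UNIV w \<noteq> {}"
  then obtain v where "w \<noteq> []" "v \<in> rel_range Ed r s lab UNIV w" by (auto simp: rel_range_RR)
  then show "w \<in> Lplus Ed r s lab" by (auto simp: rel_range_def Lplus_def)
qed

lemma Lstar_RR: "w \<in> Lstar Ed r s lab \<longleftrightarrow> RR Ed r s lab UNIV w \<noteq> {}"
  by (cases "w = []") (auto simp: Lstar_def Lplus_RR)

lemma rng_RR: "rng Ed r s lab w = RR Ed r s lab UNIV w"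
  by (simp add: rng_def rel_range_RR)

lemma Bsub_RR: "Bsub Ed r s lab B w = {A \<in> B. A \<subseteq> RR Ed r s lab UNIV w}"
  by (auto simp: Bsub_def rng_RR)

lemma ES_RR: "ES Ed r s lab B = insert None {Some (w, A, w) | w A. A \<in> B \<and> A \<noteq> {} \<and> A \<subseteq> RR Ed r s lab UNIV w}"
  unfolding ES_def Bsub_RR Lstar_RR by blast

lemma RR_append: "RR Ed r s lab A (u @ w) = RR Ed r s lab (RR Ed r s lab A u) w"
  by (induction u arbitrary: A) auto

lemma RR_mono: "A \<subseteq> C \<Longrightarrow> RR Ed r s lab A w \<subseteq> RR Ed r s lab C w"
proof (induction w arbitrary: A C)
  case Nil then show ?case by simp
next
  case (Cons a w)
  have "step Ed r s lab A a \<subseteq> step Ed r s lab C a" using Cons.prems by (auto simp: step_def)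
  then show ?case using Cons.IH by simp
qed

lemma RR_Un: "RR Ed r s lab (A \<union> C) w = RR Ed r s lab A w \<union> RR Ed r s lab C w"
proof (induction w arbitrary: A C)
  case Nil then show ?case by simp
next
  case (Cons a w)
  have "step Ed r s lab (A \<union> C) a = step Ed r s lab A a \<union> step Ed r s lab C a" by (auto simp: step_def)
  then show ?case using Cons.IH by simp
qed

lemma RR_empty: "RR Ed r s lab {} w = {}"
proof (induction w)
  case Nil then show ?case by simp
next
  case (Cons a w)
  have "step Ed r s lab {} a = {}" by (auto simp: step_def)
  then show ?case using Cons by simp
qed

lemma RR_sinks: "A \<subseteq> sinks Ed s \<Longrightarrow> w \<noteq> [] \<Longrightarrow> RR Ed r s lab A w = {}"
proof (cases w)
  case (Cons a w')
  assume "A \<subseteq> sinks Ed s"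
  then have "step Ed r s lab A a = {}" by (auto simp: step_def sinks_def)
  then show ?thesis using Cons RR_empty by simp
qed simp

lemma RR_single: "RR Ed r s lab A [a] = step Ed r s lab A a" by simp

lemma drop_prefix_append:
  "prefix \<alpha> \<beta> \<Longrightarrow> prefix \<beta> \<delta> \<Longrightarrow> drop (length \<alpha>) \<beta> @ drop (length \<beta>) \<delta> = drop (length \<alpha>) \<delta>"
  by (auto simp: prefix_def)

lemma prefix_drop_app: "prefix \<alpha> \<beta> \<Longrightarrow> \<alpha> @ drop (length \<alpha>) \<beta> = \<beta>"
  by (auto simp: prefix_def)


locale LS =
  fixes Ed :: "'e set" and r s :: "'e \<Rightarrow> 'v" and lab :: "'e \<Rightarrow> 'a" and B :: "'v set set"
  assumes acc: "accommodating Ed r s lab B"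
    and wlr: "weakly_left_resolving Ed r s lab B"
    and crc: "closed_rel_compl B"
begin

abbreviation "R \<equiv> RR Ed r s lab"
abbreviation "U w \<equiv> RR Ed r s lab UNIV w"
abbreviation "ESS \<equiv> ES Ed r s lab B"
abbreviation "le x y \<equiv> sleq Ed r s lab x y"
abbreviation "mul \<equiv> smult Ed r s lab"
abbreviation "filt \<equiv> filterE Ed r s lab B"

lemma B_Int: "A \<in> B \<Longrightarrow> C \<in> B \<Longrightarrow> A \<inter> C \<in> B"
  using acc by (auto simp: accommodating_def)

lemma B_Diff: "A \<in> B \<Longrightarrow> C \<in> B \<Longrightarrow> A - C \<in> B"
  using crc by (auto simp: closed_rel_compl_def)

lemma B_R: "A \<in> B \<Longrightarrow> R A w \<in> B"
proof (cases "w \<in> Lplus Ed r s lab")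
  case True
  assume "A \<in> B"
  then show ?thesis using True acc by (auto simp: accommodating_def rel_range_RR)
next
  case False
  assume A: "A \<in> B"
  show ?thesis
  proof (cases "w = []")
    case True then show ?thesis using A by simp
  next
    case f2: False
    then have "U w = {}" using False Lplus_RR by blast
    then have "R A w = {}" using RR_mono[of A UNIV] by blast
    then show ?thesis using B_Diff[OF A A] by simp
  qed
qed

lemma R_Int: "A \<in> B \<Longrightarrow> C \<in> B \<Longrightarrow> R (A \<inter> C) w = R A w \<inter> R C w"
proof (cases "w \<in> Lplus Ed r s lab")
  case True
  assume "A \<in> B" "C \<in> B"
  then show ?thesis using True wlr by (auto simp: weakly_left_resolving_def rel_range_RR)
next
  case False
  show ?thesis
  proof (cases "w = []")
    case True then show ?thesis by simp
  next
    case f2: False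
    then have "U w = {}" using False Lplus_RR by blast
    then have "R X w = {}" for X using RR_mono[of X UNIV] by blast
    then show ?thesis by simp
  qed
qed

lemma ES_Some: "Some (w, A, w) \<in> ESS \<longleftrightarrow> A \<in> B \<and> A \<noteq> {} \<and> A \<subseteq> U w"
  unfolding ES_RR by auto

lemma ES_cases: "x \<in> ESS \<Longrightarrow> x = None \<or> (\<exists>w A. x = Some (w, A, w) \<and> A \<in> B \<and> A \<noteq> {} \<and> A \<subseteq> U w)"
  unfolding ES_RR by auto

lemma mul_diag: "mul (Some (\<alpha>, A, \<alpha>)) (Some (\<beta>, C, \<beta>)) =
  (if prefix \<alpha> \<beta> then mk \<beta> (R A (drop (length \<alpha>) \<beta>) \<inter> C) \<beta>
   else if prefix \<beta> \<alpha> then mk \<alpha> (A \<inter> R C (drop (length \<beta>) \<alpha>)) \<alpha> else None)"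
  by (simp add: Let_def rel_range_RR prefix_drop_app)

declare smult.simps(3)[simp del]

lemma mk_Some: "X \<noteq> {} \<Longrightarrow> mk w X w = Some (w, X, w)" by (simp add: mk_def)
lemma mk_None: "mk w {} w = None" by (simp add: mk_def)

lemma le_None1: "le None y" by (simp add: sleq_def)
lemma le_None2: "le x None \<Longrightarrow> x = None"
  by (cases x) (auto simp: sleq_def)

lemma le_char: "A \<noteq> {} \<Longrightarrow> le (Some (\<alpha>, A, \<alpha>)) (Some (\<beta>, C, \<beta>)) \<longleftrightarrow> prefix \<beta> \<alpha> \<and> A \<subseteq> R C (drop (length \<beta>) \<alpha>)"
proof -
  assume A: "A \<noteq> {}"
  show ?thesis
  proof (cases "prefix \<alpha> \<beta>")
    case True
    show ?thesis
    proof (cases "\<alpha> = \<beta>")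
      case True
      then show ?thesis using A by (auto simp: sleq_def mul_diag mk_def)
    next
      case False
      then have "\<not> prefix \<beta> \<alpha>" using True prefix_order.antisym by blast
      then show ?thesis using True False by (auto simp: sleq_def mul_diag mk_def)
    qed
  next
    case False
    show ?thesis
    proof (cases "prefix \<beta> \<alpha>")
      case True
      then show ?thesis using False A by (auto simp: sleq_def mul_diag mk_def)
    next
      case f2: False
      then show ?thesis using False by (auto simp: sleq_def mul_diag)
    qed
  qed
qed

lemma mul_ES: "x \<in> ESS \<Longrightarrow> y \<in> ESS \<Longrightarrow> mul x y \<in> ESS"
proof -
  assume x: "x \<in> ESS" and y: "y \<in> ESS"
  show ?thesis
  proof (cases "x = None \<or> y = None")
    case True
    then show ?thesis by (cases x) (auto simp: ES_def)
  next
    case False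
    then obtain \<alpha> A \<beta> C where xa: "x = Some (\<alpha>, A, \<alpha>)" "A \<in> B" "A \<noteq> {}" "A \<subseteq> U \<alpha>"
      and yb: "y = Some (\<beta>, C, \<beta>)" "C \<in> B" "C \<noteq> {}" "C \<subseteq> U \<beta>"
      using ES_cases[OF x] ES_cases[OF y] by blast
    have N: "None \<in> ESS" by (simp add: ES_def)
    show ?thesis
    proof (cases "prefix \<alpha> \<beta>")
      case True
      let ?M = "R A (drop (length \<alpha>) \<beta>) \<inter> C"
      have "?M \<in> B" using B_Int[OF B_R[OF xa(2)] yb(2)] .
      moreover have "?M \<subseteq> U \<beta>" using yb by auto
      ultimately show ?thesis using True xa yb N ES_Some by (cases "?M = {}") (auto simp: mul_diag mk_def)
    next
      case False
      show ?thesis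
      proof (cases "prefix \<beta> \<alpha>")
        case True
        let ?M = "A \<inter> R C (drop (length \<beta>) \<alpha>)"
        have "?M \<in> B" using B_Int[OF xa(2) B_R[OF yb(2)]] .
        moreover have "?M \<subseteq> U \<alpha>" using xa by auto
        ultimately show ?thesis using True False xa yb N ES_Some by (cases "?M = {}") (auto simp: mul_diag mk_def)
      next
        case f2: False
        then show ?thesis using False xa yb N by (simp add: mul_diag)
      qed
    qed
  qed
qed

lemma mul_None2: "mul x None = None" by (cases x) auto

lemma le_refl: "x \<in> ESS \<Longrightarrow> le x x"
proof -
  assume x: "x \<in> ESS"
  show ?thesis
  proof (cases "x = None")
    case True then show ?thesis by (simp add: le_None1)
  next
    case False
    then obtain w A where "x = Some (w, A, w)" "A \<noteq> {}" using ES_cases[OF x] by blast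
    then show ?thesis using le_char by simp
  qed
qed

lemma mul_lower: "x \<in> ESS \<Longrightarrow> y \<in> ESS \<Longrightarrow> le (mul x y) x \<and> le (mul x y) y"
proof -
  assume x: "x \<in> ESS" and y: "y \<in> ESS"
  show ?thesis
  proof (cases "mul x y = None")
    case True then show ?thesis by (simp add: le_None1)
  next
    case False
    have nn1: "x \<noteq> None" using False by (cases x) auto
    have nn2: "y \<noteq> None"
    proof
      assume "y = None" then show False using False mul_None2 by simp
    qed
    have nn: "x \<noteq> None" "y \<noteq> None" using nn1 nn2 by auto
    then obtain \<alpha> A \<beta> C where xa: "x = Some (\<alpha>, A, \<alpha>)" "A \<in> B" "A \<noteq> {}" "A \<subseteq> U \<alpha>"
      and yb: "y = Some (\<beta>, C, \<beta>)" "C \<in> B" "C \<noteq> {}" "C \<subseteq> U \<beta>"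
      using ES_cases[OF x] ES_cases[OF y] by blast
    show ?thesis
    proof (cases "prefix \<alpha> \<beta>")
      case True
      let ?M = "R A (drop (length \<alpha>) \<beta>) \<inter> C"
      have M: "?M \<noteq> {}" using False True xa yb by (auto simp: mul_diag mk_def)
      then show ?thesis using True xa yb by (simp add: mul_diag mk_Some le_char)
    next
      case nf: False
      then have T: "prefix \<beta> \<alpha>" using False xa yb by (auto simp: mul_diag split: if_splits)
      let ?M = "A \<inter> R C (drop (length \<beta>) \<alpha>)"
      have M: "?M \<noteq> {}" using False T nf xa yb by (auto simp: mul_diag mk_def)
      then show ?thesis using T nf xa yb by (auto simp: mul_diag mk_Some le_char)
    qed
  qed
qed

lemma le_Some_ne: "le (Some p) y \<Longrightarrow> y \<noteq> None"
  by (cases y) (auto simp: sleq_def)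

lemma mul_greatest: "z \<in> ESS \<Longrightarrow> x \<in> ESS \<Longrightarrow> y \<in> ESS \<Longrightarrow> le z x \<Longrightarrow> le z y \<Longrightarrow> le z (mul x y)"
proof -
  assume z: "z \<in> ESS" and x: "x \<in> ESS" and y: "y \<in> ESS" and zx: "le z x" and zy: "le z y"
  show ?thesis
  proof (cases "z = None")
    case True then show ?thesis by (simp add: le_None1)
  next
    case False
    then obtain \<delta> D where zd: "z = Some (\<delta>, D, \<delta>)" "D \<in> B" "D \<noteq> {}" "D \<subseteq> U \<delta>"
      using ES_cases[OF z] by blast
    have "x \<noteq> None" "y \<noteq> None" using zx zy zd le_Some_ne by blast+
    then obtain \<alpha> A \<beta> C where xa: "x = Some (\<alpha>, A, \<alpha>)" "A \<in> B" "A \<noteq> {}" "A \<subseteq> U \<alpha>"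
      and yb: "y = Some (\<beta>, C, \<beta>)" "C \<in> B" "C \<noteq> {}" "C \<subseteq> U \<beta>"
      using ES_cases[OF x] ES_cases[OF y] by blast
    have p1: "prefix \<alpha> \<delta>" and s1: "D \<subseteq> R A (drop (length \<alpha>) \<delta>)"
      using zx zd xa le_char by auto
    have p2: "prefix \<beta> \<delta>" and s2: "D \<subseteq> R C (drop (length \<beta>) \<delta>)"
      using zy zd yb le_char by auto
    show ?thesis
    proof (cases "prefix \<alpha> \<beta>")
      case True
      let ?M = "R A (drop (length \<alpha>) \<beta>) \<inter> C"
      have "R ?M (drop (length \<beta>) \<delta>) = R (R A (drop (length \<alpha>) \<beta>)) (drop (length \<beta>) \<delta>) \<inter> R C (drop (length \<beta>) \<delta>)"
        using R_Int[OF B_R[OF xa(2)] yb(2)] .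
      also have "R (R A (drop (length \<alpha>) \<beta>)) (drop (length \<beta>) \<delta>) = R A (drop (length \<alpha>) \<delta>)"
        using RR_append[symmetric] drop_prefix_append[OF True p2] by metis
      finally have sub: "D \<subseteq> R ?M (drop (length \<beta>) \<delta>)" using s1 s2 by auto
      then have "?M \<noteq> {}" using zd by (metis RR_empty subset_empty)
      then have "mul x y = Some (\<beta>, ?M, \<beta>)" using True xa yb by (simp add: mul_diag mk_Some)
      then show ?thesis using le_char[OF zd(3)] p2 sub zd(1) by simp
    next
      case nf: False
      then have T: "prefix \<beta> \<alpha>" using p1 p2 prefix_same_cases by blast
      let ?M = "A \<inter> R C (drop (length \<beta>) \<alpha>)"
      have "R ?M (drop (length \<alpha>) \<delta>) = R A (drop (length \<alpha>) \<delta>) \<inter> R (R C (drop (length \<beta>) \<alpha>)) (drop (length \<alpha>) \<delta>)"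
        using R_Int[OF xa(2) B_R[OF yb(2)]] .
      also have "R (R C (drop (length \<beta>) \<alpha>)) (drop (length \<alpha>) \<delta>) = R C (drop (length \<beta>) \<delta>)"
        using RR_append[symmetric] drop_prefix_append[OF T p1] by metis
      finally have sub: "D \<subseteq> R ?M (drop (length \<alpha>) \<delta>)" using s1 s2 by auto
      then have "?M \<noteq> {}" using zd by (metis RR_empty subset_empty)
      then have "mul x y = Some (\<alpha>, ?M, \<alpha>)" using T nf xa yb by (simp add: mul_diag mk_Some)
      then show ?thesis using le_char[OF zd(3)] p1 sub zd(1) by simp
    qed
  qed
qed

lemma le_trans: "x \<in> ESS \<Longrightarrow> y \<in> ESS \<Longrightarrow> z \<in> ESS \<Longrightarrow> le x y \<Longrightarrow> le y z \<Longrightarrow> le x z"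
proof -
  assume x: "x \<in> ESS" and y: "y \<in> ESS" and z: "z \<in> ESS" and xy: "le x y" and yz: "le y z"
  show ?thesis
  proof (cases "x = None")
    case True then show ?thesis by (simp add: le_None1)
  next
    case False
    then obtain \<alpha> A where xa: "x = Some (\<alpha>, A, \<alpha>)" "A \<in> B" "A \<noteq> {}" "A \<subseteq> U \<alpha>"
      using ES_cases[OF x] by blast
    have "y \<noteq> None" using xy xa le_Some_ne by blast
    then obtain \<beta> C where yb: "y = Some (\<beta>, C, \<beta>)" "C \<in> B" "C \<noteq> {}" "C \<subseteq> U \<beta>"
      using ES_cases[OF y] by blast
    have "z \<noteq> None" using yz yb le_Some_ne by blast
    then obtain \<delta> D where zd: "z = Some (\<delta>, D, \<delta>)" "D \<in> B" "D \<noteq> {}" "D \<subseteq> U \<delta>"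
      using ES_cases[OF z] by blast
    have p1: "prefix \<beta> \<alpha>" and s1: "A \<subseteq> R C (drop (length \<beta>) \<alpha>)" using xy xa yb le_char by auto
    have p2: "prefix \<delta> \<beta>" and s2: "C \<subseteq> R D (drop (length \<delta>) \<beta>)" using yz yb zd le_char by auto
    have "R C (drop (length \<beta>) \<alpha>) \<subseteq> R (R D (drop (length \<delta>) \<beta>)) (drop (length \<beta>) \<alpha>)"
      using RR_mono[OF s2] .
    also have "\<dots> = R D (drop (length \<delta>) \<alpha>)"
      using RR_append[symmetric] drop_prefix_append[OF p2 p1] by metis
    finally have "A \<subseteq> R D (drop (length \<delta>) \<alpha>)" using s1 by blast
    then show ?thesis using xa(1) zd(1) le_char[OF xa(3)] prefix_order.trans[OF p2 p1] by simp
  qed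
qed

end

context LS begin

lemma filt_sub: "filt \<xi> \<Longrightarrow> \<xi> \<subseteq> ESS" by (simp add: filterE_def)
lemma filt_None: "filt \<xi> \<Longrightarrow> None \<notin> \<xi>" by (simp add: filterE_def)
lemma filt_ne: "filt \<xi> \<Longrightarrow> \<xi> \<noteq> {}" by (simp add: filterE_def)
lemma filt_up: "filt \<xi> \<Longrightarrow> x \<in> \<xi> \<Longrightarrow> y \<in> ESS \<Longrightarrow> le x y \<Longrightarrow> y \<in> \<xi>"
  by (simp add: filterE_def)
lemma filt_dir: "filt \<xi> \<Longrightarrow> x \<in> \<xi> \<Longrightarrow> y \<in> \<xi> \<Longrightarrow> \<exists>z\<in>\<xi>. le z x \<and> le z y"
  by (simp add: filterE_def)

lemma filt_elem: "filt \<xi> \<Longrightarrow> x \<in> \<xi> \<Longrightarrow> \<exists>w A. x = Some (w, A, w) \<and> A \<in> B \<and> A \<noteq> {} \<and> A \<subseteq> U w"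
proof -
  assume F: "filt \<xi>" and x: "x \<in> \<xi>"
  have "x \<in> ESS" using filt_sub[OF F] x by blast
  moreover have "x \<noteq> None" using filt_None[OF F] x by metis
  ultimately show ?thesis using ES_cases by blast
qed

lemma filt_meet: "filt \<xi> \<Longrightarrow> x \<in> \<xi> \<Longrightarrow> y \<in> \<xi> \<Longrightarrow> mul x y \<in> \<xi>"
proof -
  assume F: "filt \<xi>" and x: "x \<in> \<xi>" and y: "y \<in> \<xi>"
  obtain z where z: "z \<in> \<xi>" "le z x" "le z y" using filt_dir[OF F x y] by blast
  have E: "x \<in> ESS" "y \<in> ESS" "z \<in> ESS" using x y z filt_sub[OF F] by auto
  have "le z (mul x y)" using mul_greatest E z by blast
  then show ?thesis using filt_up[OF F z(1) mul_ES[OF E(1,2)]] by blast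
qed

lemma filt_cmp: "filt \<xi> \<Longrightarrow> Some (\<alpha>, A, \<alpha>) \<in> \<xi> \<Longrightarrow> Some (\<beta>, C, \<beta>) \<in> \<xi> \<Longrightarrow> prefix \<alpha> \<beta> \<or> prefix \<beta> \<alpha>"
proof -
  assume F: "filt \<xi>" and a: "Some (\<alpha>, A, \<alpha>) \<in> \<xi>" and b: "Some (\<beta>, C, \<beta>) \<in> \<xi>"
  have "mul (Some (\<alpha>, A, \<alpha>)) (Some (\<beta>, C, \<beta>)) \<in> \<xi>" using filt_meet[OF F a b] .
  then have "mul (Some (\<alpha>, A, \<alpha>)) (Some (\<beta>, C, \<beta>)) \<noteq> None" using filt_None[OF F] by metis
  then show ?thesis
  proof (rule contrapos_np)
    assume "\<not> (prefix \<alpha> \<beta> \<or> prefix \<beta> \<alpha>)"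
    then show "mul (Some (\<alpha>, A, \<alpha>)) (Some (\<beta>, C, \<beta>)) = None" by (simp add: mul_diag)
  qed
qed

lemma None_ES: "None \<in> ESS" by (simp add: ES_def)

lemma tight_split:
  assumes F: "filt \<xi>" and T: "tight Ed r s lab B \<xi>" and x: "Some (w, A, w) \<in> \<xi>" and C: "C \<in> B"
  shows "mk w (A \<inter> C) w \<in> \<xi> \<or> mk w (A - C) w \<in> \<xi>"
proof -
  let ?x = "Some (w, A, w)"
  have A: "A \<in> B" "A \<noteq> {}" "A \<subseteq> U w" using filt_elem[OF F x] by auto
  have inZ: "mk w X w \<in> ESS \<and> le (mk w X w) ?x" if X: "X \<in> B" "X \<subseteq> A" for X
  proof (cases "X = {}")
    case True then show ?thesis by (simp add: mk_def None_ES le_None1)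
  next
    case False
    then show ?thesis using X A by (simp add: mk_Some ES_Some le_char)
  qed
  let ?Z = "{mk w (A \<inter> C) w, mk w (A - C) w}"
  have cov: "is_cover Ed r s lab B ?x ?Z"
    unfolding is_cover_def
  proof (intro conjI ballI impI)
    show "?Z \<subseteq> {y \<in> ESS. le y ?x}" using inZ B_Int[OF A(1) C] B_Diff[OF A(1) C] by auto
  next
    fix y assume y: "y \<in> ESS" "y \<noteq> None \<and> le y ?x"
    then obtain \<delta> D where yd: "y = Some (\<delta>, D, \<delta>)" "D \<in> B" "D \<noteq> {}" "D \<subseteq> U \<delta>"
      using ES_cases by blast
    have p: "prefix w \<delta>" and sub: "D \<subseteq> R A (drop (length w) \<delta>)" using y yd le_char by auto
    have eqA: "(A \<inter> C) \<union> (A - C) = A" by blast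
    have "R A (drop (length w) \<delta>) = R (A \<inter> C) (drop (length w) \<delta>) \<union> R (A - C) (drop (length w) \<delta>)"
      using RR_Un[of Ed r s lab "A \<inter> C" "A - C" "drop (length w) \<delta>"] eqA by simp
    moreover obtain v where v: "v \<in> D" using yd by blast
    ultimately have "v \<in> R (A \<inter> C) (drop (length w) \<delta>) \<or> v \<in> R (A - C) (drop (length w) \<delta>)"
      using sub by blast
    then show "\<exists>z\<in>?Z. mul z y \<noteq> None"
    proof
      assume v1: "v \<in> R (A \<inter> C) (drop (length w) \<delta>)"
      then have ne: "A \<inter> C \<noteq> {}" using RR_empty[of Ed r s lab] by (metis empty_iff)
      have "mul (mk w (A \<inter> C) w) y = mk \<delta> (R (A \<inter> C) (drop (length w) \<delta>) \<inter> D) \<delta>"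
        using ne p yd by (simp add: mk_Some mul_diag)
      also have "\<dots> \<noteq> None" using v v1 by (auto simp: mk_def)
      finally show ?thesis by blast
    next
      assume v1: "v \<in> R (A - C) (drop (length w) \<delta>)"
      then have ne: "A - C \<noteq> {}" using RR_empty[of Ed r s lab] by (metis empty_iff)
      have "mul (mk w (A - C) w) y = mk \<delta> (R (A - C) (drop (length w) \<delta>) \<inter> D) \<delta>"
        using ne p yd by (simp add: mk_Some mul_diag)
      also have "\<dots> \<noteq> None" using v v1 by (auto simp: mk_def)
      finally show ?thesis by blast
    qed
  qed
  have fz: "finite ?Z" by simp
  have "?Z \<inter> \<xi> \<noteq> {}"
    by (rule T[unfolded tight_def, rule_format, OF x]) (intro conjI fz cov)
  then show ?thesis by blast
qed

lemma ultra_sep: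
  assumes U: "ultrafilterE Ed r s lab B \<xi>" and e: "e \<in> ESS" "e \<notin> \<xi>"
  shows "\<exists>f\<in>\<xi>. mul e f = None"
proof (rule ccontr)
  assume H: "\<not> (\<exists>f\<in>\<xi>. mul e f = None)"
  have F: "filt \<xi>" using U by (simp add: ultrafilterE_def)
  have Xs: "\<xi> \<subseteq> ESS" using filt_sub[OF F] .
  define \<eta> where "\<eta> = {g \<in> ESS. \<exists>f\<in>\<xi>. le (mul e f) g}"
  have fe: "mul e f \<in> ESS" if "f \<in> \<xi>" for f using mul_ES e Xs that by blast
  have "filt \<eta>" unfolding filterE_def
  proof (intro conjI ballI impI)
    show "\<eta> \<subseteq> ESS" by (auto simp: \<eta>_def)
  next
    obtain f where "f \<in> \<xi>" using filt_ne[OF F] by blast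
    then have "e \<in> \<eta>" using mul_lower[OF e(1)] Xs e by (auto simp: \<eta>_def)
    then show "\<eta> \<noteq> {}" by blast
  next
    show "None \<notin> \<eta>"
    proof
      assume "None \<in> \<eta>"
      then obtain f where f: "f \<in> \<xi>" "le (mul e f) None" by (auto simp: \<eta>_def)
      have "mul e f = None" using le_None2 f(2) by blast
      with H f show False by blast
    qed
  next
    fix x y assume "x \<in> \<eta>" "y \<in> ESS" "le x y"
    then show "y \<in> \<eta>" unfolding \<eta>_def using le_trans fe by blast
  next
    fix g1 g2 assume g: "g1 \<in> \<eta>" "g2 \<in> \<eta>"
    then obtain f1 f2 where f: "f1 \<in> \<xi>" "f2 \<in> \<xi>" "le (mul e f1) g1" "le (mul e f2) g2" "g1 \<in> ESS" "g2 \<in> ESS"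
      by (auto simp: \<eta>_def)
    obtain f3 where f3: "f3 \<in> \<xi>" "le f3 f1" "le f3 f2" using filt_dir[OF F f(1,2)] by blast
    let ?z = "mul e f3"
    have zE: "?z \<in> ESS" using fe f3 by blast
    have z1: "le ?z e" "le ?z f3" using mul_lower e Xs f3 by blast+
    have "le ?z f1" "le ?z f2" using le_trans[OF zE _ _ z1(2)] f3 Xs f by blast+
    then have "le ?z (mul e f1)" "le ?z (mul e f2)" using mul_greatest[OF zE e(1)] z1 Xs f by blast+
    then have "le ?z g1" "le ?z g2" using le_trans zE fe f by blast+
    moreover have "?z \<in> \<eta>" using zE f3 le_refl by (auto simp: \<eta>_def)
    ultimately show "\<exists>z\<in>\<eta>. le z g1 \<and> le z g2" by blast
  qed
  moreover have "\<xi> \<subseteq> \<eta>" using mul_lower e Xs by (auto simp: \<eta>_def)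
  ultimately have "\<eta> = \<xi>" using U by (simp add: ultrafilterE_def)
  moreover have "e \<in> \<eta>"
  proof -
    obtain f where "f \<in> \<xi>" using filt_ne[OF F] by blast
    then show ?thesis using mul_lower[OF e(1)] Xs e by (auto simp: \<eta>_def)
  qed
  ultimately show False using e by blast
qed

lemma mul_None_mono: "z \<in> ESS \<Longrightarrow> y \<in> ESS \<Longrightarrow> y' \<in> ESS \<Longrightarrow> le y' y \<Longrightarrow> mul z y = None \<Longrightarrow> mul z y' = None"
proof -
  assume E: "z \<in> ESS" "y \<in> ESS" "y' \<in> ESS" and l: "le y' y" and n: "mul z y = None"
  have wE: "mul z y' \<in> ESS" using mul_ES E by blast
  have "le (mul z y') z" "le (mul z y') y'" using mul_lower E by blast+
  then have "le (mul z y') y" using le_trans wE E l by blast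
  then have "le (mul z y') (mul z y)" using mul_greatest wE E \<open>le (mul z y') z\<close> by blast
  then show ?thesis using n le_None2 by simp
qed

lemma ultra_tight:
  assumes U: "ultrafilterE Ed r s lab B \<xi>"
  shows "tight Ed r s lab B \<xi>"
  unfolding tight_def
proof (intro ballI allI impI)
  fix x Z assume x: "x \<in> \<xi>" and Z: "finite Z \<and> is_cover Ed r s lab B x Z"
  have F: "filt \<xi>" using U by (simp add: ultrafilterE_def)
  have Xs: "\<xi> \<subseteq> ESS" using filt_sub[OF F] .
  show "Z \<inter> \<xi> \<noteq> {}"
  proof
    assume D: "Z \<inter> \<xi> = {}"
    have ZE: "Z \<subseteq> ESS" using Z by (auto simp: is_cover_def)
    have ind: "finite Z' \<Longrightarrow> Z' \<subseteq> Z \<Longrightarrow> \<exists>y\<in>\<xi>. le y x \<and> (\<forall>z\<in>Z'. mul z y = None)" for Z'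
    proof (induction Z' rule: finite_induct)
      case empty show ?case using x le_refl Xs by blast
    next
      case (insert z Z')
      note 3 = insert
      obtain y where y: "y \<in> \<xi>" "le y x" "\<forall>z\<in>Z'. mul z y = None" using 3 by blast
      have zE: "z \<in> ESS" "z \<notin> \<xi>" using 3 ZE D by auto
      obtain f where f: "f \<in> \<xi>" "mul z f = None" using ultra_sep[OF U zE] by blast
      let ?y = "mul y f"
      have y': "?y \<in> \<xi>" using filt_meet[OF F y(1) f(1)] .
      have fE: "f \<in> ESS" and yE: "y \<in> ESS" and y'E: "?y \<in> ESS" and xE: "x \<in> ESS"
        using Xs f y y' x by auto
      have l: "le ?y y" "le ?y f" using mul_lower[OF yE fE] by auto
      have "le ?y x" using le_trans[OF y'E yE xE l(1) y(2)] .
      moreover have "\<forall>z'\<in>insert z Z'. mul z' ?y = None"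
      proof
        fix z' assume "z' \<in> insert z Z'"
        then show "mul z' ?y = None"
        proof
          assume "z' = z" then show ?thesis using mul_None_mono[OF zE(1) fE y'E l(2) f(2)] by simp
        next
          assume z': "z' \<in> Z'"
          then have z'E: "z' \<in> ESS" using ZE 3 by auto
          show ?thesis using mul_None_mono[OF z'E yE y'E l(1)] y(3) z' by simp
        qed
      qed
      ultimately show ?case using y' by blast
    qed
    have fZ: "finite Z" using Z by simp
    obtain y where y: "y \<in> \<xi>" "le y x" "\<forall>z\<in>Z. mul z y = None" using ind[OF fZ subset_refl] by blast
    have yy1: "y \<in> ESS" using y Xs by auto
    have yy2: "y \<noteq> None" using y(1) filt_None[OF F] by metis
    note yy = yy1 yy2
    have cov: "\<forall>y\<in>ESS. y \<noteq> None \<and> le y x \<longrightarrow> (\<exists>z\<in>Z. mul z y \<noteq> None)"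
      using Z by (simp add: is_cover_def)
    then obtain z where "z \<in> Z" "mul z y \<noteq> None" using yy y(2) by blast
    then show False using y(3) by auto
  qed
qed

lemma inf_long:
  assumes F: "filt \<xi>" and I: "infinite_type \<xi>"
  shows "\<exists>\<alpha> A. Some (\<alpha>, A, \<alpha>) \<in> \<xi> \<and> n < length \<alpha>"
proof (rule ccontr)
  assume H: "\<not> ?thesis"
  let ?W = "filter_words \<xi>"
  have bound: "\<forall>\<beta>\<in>?W. length \<beta> \<le> n" using H by (auto simp: filter_words_def not_less)
  have "length ` ?W \<subseteq> {..n}" using bound by auto
  then have fin: "finite (length ` ?W)" using finite_subset by blast
  obtain x where "x \<in> \<xi>" using filt_ne[OF F] by blast
  then obtain w A where "Some (w, A, w) \<in> \<xi>" using filt_elem[OF F] by blast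
  then have ne: "length ` ?W \<noteq> {}" by (auto simp: filter_words_def)
  have "Max (length ` ?W) \<in> length ` ?W" using Max_in[OF fin ne] .
  then obtain \<alpha> where \<alpha>: "\<alpha> \<in> ?W" "length \<alpha> = Max (length ` ?W)" by auto
  have "finite_type_word \<xi> \<alpha>" unfolding finite_type_word_def using \<alpha> Max_ge[OF fin] by auto
  then show False using I by (auto simp: infinite_type_def)
qed

lemma tight_inf_ultra:
  assumes F: "filt \<xi>" and T: "tight Ed r s lab B \<xi>" and I: "infinite_type \<xi>"
  shows "ultrafilterE Ed r s lab B \<xi>"
  unfolding ultrafilterE_def
proof (intro conjI allI impI F)
  fix \<eta> assume H: "filt \<eta> \<and> \<xi> \<subseteq> \<eta>"
  then have G: "filt \<eta>" and sub: "\<xi> \<subseteq> \<eta>" by auto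
  have Xs: "\<xi> \<subseteq> ESS" "\<eta> \<subseteq> ESS" using filt_sub F G by auto
  have "\<eta> \<subseteq> \<xi>"
  proof
    fix y assume y: "y \<in> \<eta>"
    obtain x where x: "x \<in> \<xi>" using filt_ne[OF F] by blast
    let ?z = "mul y x"
    have z: "?z \<in> \<eta>" using filt_meet[OF G y] x sub by blast
    have zy: "le ?z y" using mul_lower y x Xs sub by blast
    obtain \<delta> D where zd: "?z = Some (\<delta>, D, \<delta>)" "D \<in> B" "D \<noteq> {}" using filt_elem[OF G z] by blast
    obtain \<delta>' A' where x': "Some (\<delta>', A', \<delta>') \<in> \<xi>" "length \<delta> < length \<delta>'" using inf_long[OF F I] by blast
    have zz: "Some (\<delta>, D, \<delta>) \<in> \<eta>" using z zd by simp
    have xx: "Some (\<delta>', A', \<delta>') \<in> \<eta>" using x' sub by blast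
    have "prefix \<delta> \<delta>' \<or> prefix \<delta>' \<delta>" using filt_cmp[OF G zz xx] .
    then have p: "prefix \<delta> \<delta>'" using x' prefix_length_le by fastforce
    let ?C = "R D (drop (length \<delta>) \<delta>')"
    have CB: "?C \<in> B" using B_R zd by blast
    let ?w = "mul ?z (Some (\<delta>', A', \<delta>'))"
    have w: "?w \<in> \<eta>" using filt_meet[OF G z] x' sub by blast
    have weq: "?w = mk \<delta>' (?C \<inter> A') \<delta>'" using zd p by (simp add: mul_diag)
    from tight_split[OF F T x'(1) CB]
    show "y \<in> \<xi>"
    proof
      assume "mk \<delta>' (A' \<inter> ?C) \<delta>' \<in> \<xi>"
      then have wx: "?w \<in> \<xi>" using weq by (simp add: Int_commute)
      have "le ?w ?z" using mul_lower z x' Xs sub by blast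
      then have "?z \<in> \<xi>" using filt_up[OF F wx] z Xs by blast
      then show "y \<in> \<xi>" using filt_up[OF F _ _ zy] y Xs by blast
    next
      assume u: "mk \<delta>' (A' - ?C) \<delta>' \<in> \<xi>"
      then have "A' - ?C \<noteq> {}" using filt_None[OF F] by (auto simp: mk_def)
      then have u': "Some (\<delta>', A' - ?C, \<delta>') \<in> \<eta>" using u sub by (auto simp: mk_Some)
      have "?C \<inter> A' \<noteq> {}" using w weq filt_None[OF G] by (auto simp: mk_def)
      then have w': "Some (\<delta>', ?C \<inter> A', \<delta>') \<in> \<eta>" using w weq by (simp add: mk_Some)
      have "mul (Some (\<delta>', A' - ?C, \<delta>')) (Some (\<delta>', ?C \<inter> A', \<delta>')) = None"
        by (auto simp: mul_diag mk_def)
      then have "None \<in> \<eta>" using filt_meet[OF G u' w'] by simp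
      then show "y \<in> \<xi>" using filt_None[OF G] by blast
    qed
  qed
  then show "\<eta> = \<xi>" using sub by blast
qed

end

lemma sf_dir: assumes "set_filter F \<phi>" "A \<in> \<phi>" "C \<in> \<phi>" shows "\<exists>D\<in>\<phi>. D \<subseteq> A \<and> D \<subseteq> C"
proof -
  have "\<forall>A\<in>\<phi>. \<forall>C\<in>\<phi>. \<exists>D\<in>\<phi>. D \<subseteq> A \<and> D \<subseteq> C" using assms(1) by (simp add: set_filter_def)
  then show ?thesis using assms(2,3) by blast
qed
lemma sf_sub: "set_filter F \<phi> \<Longrightarrow> \<phi> \<subseteq> F" by (simp add: set_filter_def)
lemma sf_empty: "set_filter F \<phi> \<Longrightarrow> {} \<notin> \<phi>" by (simp add: set_filter_def)
lemma sf_ne: "set_filter F \<phi> \<Longrightarrow> \<phi> \<noteq> {}" by (simp add: set_filter_def)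

lemma su_sep:
  assumes UF: "set_ultrafilter F \<phi>" and Fi: "\<forall>X\<in>F. \<forall>Y\<in>F. X \<inter> Y \<in> F" and C: "C \<in> F"
    and H: "\<forall>D\<in>\<phi>. D \<inter> C \<noteq> {}"
  shows "C \<in> \<phi>"
proof -
  have sf: "set_filter F \<phi>" using UF by (simp add: set_ultrafilter_def)
  define \<psi> where "\<psi> = {E \<in> F. \<exists>D\<in>\<phi>. D \<inter> C \<subseteq> E}"
  have psi_iff: "E \<in> \<psi> \<longleftrightarrow> E \<in> F \<and> (\<exists>D\<in>\<phi>. D \<inter> C \<subseteq> E)" for E
    unfolding \<psi>_def by simp
  obtain D0 where D0: "D0 \<in> \<phi>" using sf_ne[OF sf] by blast
  have Cpsi: "C \<in> \<psi>" unfolding psi_iff using C D0 by blast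
  have "set_filter F \<psi>" unfolding set_filter_def
  proof (intro conjI ballI impI)
    show "\<psi> \<subseteq> F" using psi_iff by blast
  next
    show "\<psi> \<noteq> {}" using Cpsi by blast
  next
    show "{} \<notin> \<psi>"
    proof
      assume "{} \<in> \<psi>"
      then obtain D where "D \<in> \<phi>" "D \<inter> C \<subseteq> {}" unfolding psi_iff by blast
      then show False using H by blast
    qed
  next
    fix A E assume AE: "A \<in> \<psi>" "E \<in> F" "A \<subseteq> E"
    obtain D where "D \<in> \<phi>" "D \<inter> C \<subseteq> A" using AE(1) unfolding psi_iff by blast
    then have "D \<inter> C \<subseteq> E" using AE(3) by blast
    then show "E \<in> \<psi>" unfolding psi_iff using AE(2) \<open>D \<in> \<phi>\<close> by blast
  next
    fix A E assume AE: "A \<in> \<psi>" "E \<in> \<psi>"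
    obtain D1 where D1: "D1 \<in> \<phi>" "D1 \<inter> C \<subseteq> A" using AE(1) unfolding psi_iff by blast
    obtain D2 where D2: "D2 \<in> \<phi>" "D2 \<inter> C \<subseteq> E" using AE(2) unfolding psi_iff by blast
    obtain D3 where D3: "D3 \<in> \<phi>" "D3 \<subseteq> D1" "D3 \<subseteq> D2" using sf_dir[OF sf D1(1) D2(1)] by blast
    have "D3 \<in> F" using D3(1) sf_sub[OF sf] by blast
    then have "D3 \<inter> C \<in> F" using Fi C by blast
    moreover have "D3 \<inter> C \<subseteq> D3 \<inter> C" by simp
    ultimately have "D3 \<inter> C \<in> \<psi>" unfolding psi_iff using D3(1) by blast
    moreover have "D3 \<inter> C \<subseteq> A" "D3 \<inter> C \<subseteq> E" using D1 D2 D3 by auto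
    ultimately show "\<exists>D\<in>\<psi>. D \<subseteq> A \<and> D \<subseteq> E" by blast
  qed
  moreover have "\<phi> \<subseteq> \<psi>"
  proof
    fix D assume D: "D \<in> \<phi>"
    then have "D \<in> F" using sf_sub[OF sf] by blast
    moreover have "D \<inter> C \<subseteq> D" by blast
    ultimately show "D \<in> \<psi>" unfolding psi_iff using D by blast
  qed
  ultimately have "\<psi> = \<phi>" using UF unfolding set_ultrafilter_def by blast
  then show ?thesis using Cpsi by simp
qed

context LS begin

lemma filt_Some: "filt \<xi> \<Longrightarrow> Some (w, A, w) \<in> \<xi> \<Longrightarrow> A \<in> B \<and> A \<noteq> {} \<and> A \<subseteq> U w"
  using filt_sub ES_Some by blast

lemma ft_xi: "filt \<xi> \<Longrightarrow> xi_at B \<xi> \<alpha> (length \<alpha>) = {A. Some (\<alpha>, A, \<alpha>) \<in> \<xi>}"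
  unfolding xi_at_def using filt_Some by auto

lemma ft_int: "filt \<xi> \<Longrightarrow> Some (w, A, w) \<in> \<xi> \<Longrightarrow> Some (w, C, w) \<in> \<xi> \<Longrightarrow> Some (w, A \<inter> C, w) \<in> \<xi>"
proof -
  assume F: "filt \<xi>" and a: "Some (w, A, w) \<in> \<xi>" and c: "Some (w, C, w) \<in> \<xi>"
  have m: "mul (Some (w, A, w)) (Some (w, C, w)) \<in> \<xi>" using filt_meet[OF F a c] .
  have eq: "mul (Some (w, A, w)) (Some (w, C, w)) = mk w (A \<inter> C) w" by (simp add: mul_diag)
  have "A \<inter> C \<noteq> {}"
  proof
    assume "A \<inter> C = {}"
    then have "None \<in> \<xi>" using m eq by (simp add: mk_def)
    then show False using filt_None[OF F] by blast
  qed
  then show ?thesis using m eq by (simp add: mk_Some)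
qed

lemma ft_prefix:
  assumes F: "filt \<xi>" and W: "finite_type_word \<xi> \<alpha>" and b: "Some (\<beta>, C, \<beta>) \<in> \<xi>"
  shows "prefix \<beta> \<alpha>"
proof -
  obtain A0 where a0: "Some (\<alpha>, A0, \<alpha>) \<in> \<xi>" using W by (auto simp: finite_type_word_def filter_words_def)
  have len: "length \<beta> \<le> length \<alpha>" using W b by (auto simp: finite_type_word_def filter_words_def)
  from filt_cmp[OF F b a0] show ?thesis
  proof
    assume "prefix \<alpha> \<beta>" then show ?thesis using len by (auto simp: prefix_def)
  qed simp
qed

lemma ft_below:
  assumes F: "filt \<xi>" and W: "finite_type_word \<xi> \<alpha>" and x: "x \<in> \<xi>"
  shows "\<exists>A'. Some (\<alpha>, A', \<alpha>) \<in> \<xi> \<and> le (Some (\<alpha>, A', \<alpha>)) x"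
proof -
  obtain A0 where a0: "Some (\<alpha>, A0, \<alpha>) \<in> \<xi>" using W by (auto simp: finite_type_word_def filter_words_def)
  let ?z = "mul x (Some (\<alpha>, A0, \<alpha>))"
  have z: "?z \<in> \<xi>" using filt_meet[OF F x a0] .
  have E: "x \<in> ESS" "Some (\<alpha>, A0, \<alpha>) \<in> ESS" using x a0 filt_sub[OF F] by auto
  have l: "le ?z x" "le ?z (Some (\<alpha>, A0, \<alpha>))" using mul_lower[OF E] by auto
  obtain \<delta> D where zd: "?z = Some (\<delta>, D, \<delta>)" "D \<noteq> {}" using filt_elem[OF F z] by blast
  have p1: "prefix \<alpha> \<delta>" using l(2) zd le_char by auto
  have p2: "prefix \<delta> \<alpha>" using ft_prefix[OF F W] z zd by auto
  have "\<delta> = \<alpha>" using p1 p2 prefix_order.antisym by blast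
  then show ?thesis using z l(1) zd by auto
qed

lemma ft_filter:
  assumes F: "filt \<xi>" and W: "finite_type_word \<xi> \<alpha>"
  shows "set_filter (Bsub Ed r s lab B \<alpha>) {A. Some (\<alpha>, A, \<alpha>) \<in> \<xi>}"
  unfolding set_filter_def Bsub_RR
proof (intro conjI ballI impI)
  show "{A. Some (\<alpha>, A, \<alpha>) \<in> \<xi>} \<subseteq> {A \<in> B. A \<subseteq> U \<alpha>}" using filt_Some[OF F] by blast
next
  show "{A. Some (\<alpha>, A, \<alpha>) \<in> \<xi>} \<noteq> {}" using W by (auto simp: finite_type_word_def filter_words_def)
next
  show "{} \<notin> {A. Some (\<alpha>, A, \<alpha>) \<in> \<xi>}" using filt_Some[OF F] by blast
next
  fix A C assume A: "A \<in> {A. Some (\<alpha>, A, \<alpha>) \<in> \<xi>}" and C: "C \<in> {A \<in> B. A \<subseteq> U \<alpha>}" and AC: "A \<subseteq> C"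
  have Ane: "A \<noteq> {}" using filt_Some[OF F] A by blast
  have "Some (\<alpha>, C, \<alpha>) \<in> ESS" using C Ane AC by (auto simp: ES_Some)
  moreover have "le (Some (\<alpha>, A, \<alpha>)) (Some (\<alpha>, C, \<alpha>))" using AC le_char[OF Ane] by simp
  ultimately show "C \<in> {A. Some (\<alpha>, A, \<alpha>) \<in> \<xi>}" using filt_up[OF F] A by blast
next
  fix A C assume A: "A \<in> {A. Some (\<alpha>, A, \<alpha>) \<in> \<xi>}" and C: "C \<in> {A. Some (\<alpha>, A, \<alpha>) \<in> \<xi>}"
  have "Some (\<alpha>, A \<inter> C, \<alpha>) \<in> \<xi>" using ft_int[OF F] A C by simp
  then show "\<exists>D\<in>{A. Some (\<alpha>, A, \<alpha>) \<in> \<xi>}. D \<subseteq> A \<and> D \<subseteq> C"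
    by (intro bexI[of _ "A \<inter> C"]) auto
qed

lemma tight_ft_ultra:
  assumes F: "filt \<xi>" and T: "tight Ed r s lab B \<xi>" and W: "finite_type_word \<xi> \<alpha>"
  shows "set_ultrafilter (Bsub Ed r s lab B \<alpha>) {A. Some (\<alpha>, A, \<alpha>) \<in> \<xi>}"
  unfolding set_ultrafilter_def
proof (intro conjI allI impI)
  show "set_filter (Bsub Ed r s lab B \<alpha>) {A. Some (\<alpha>, A, \<alpha>) \<in> \<xi>}" using ft_filter[OF F W] .
next
  fix \<psi> assume H: "set_filter (Bsub Ed r s lab B \<alpha>) \<psi> \<and> {A. Some (\<alpha>, A, \<alpha>) \<in> \<xi>} \<subseteq> \<psi>"
  then have sf: "set_filter (Bsub Ed r s lab B \<alpha>) \<psi>" and sub: "{A. Some (\<alpha>, A, \<alpha>) \<in> \<xi>} \<subseteq> \<psi>" by auto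
  have "\<psi> \<subseteq> {A. Some (\<alpha>, A, \<alpha>) \<in> \<xi>}"
  proof
    fix C assume C: "C \<in> \<psi>"
    then have CF: "C \<in> B" "C \<subseteq> U \<alpha>" using sf_sub[OF sf] by (auto simp: Bsub_RR)
    obtain A0 where a0: "Some (\<alpha>, A0, \<alpha>) \<in> \<xi>" using W by (auto simp: finite_type_word_def filter_words_def)
    from tight_split[OF F T a0 CF(1)]
    show "C \<in> {A. Some (\<alpha>, A, \<alpha>) \<in> \<xi>}"
    proof
      assume m: "mk \<alpha> (A0 \<inter> C) \<alpha> \<in> \<xi>"
      have ne: "A0 \<inter> C \<noteq> {}"
      proof
        assume "A0 \<inter> C = {}" then have "None \<in> \<xi>" using m by (simp add: mk_def)
        then show False using filt_None[OF F] by blast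
      qed
      then have i: "Some (\<alpha>, A0 \<inter> C, \<alpha>) \<in> \<xi>" using m by (simp add: mk_Some)
      have "C \<noteq> {}" using ne by blast
      then have "Some (\<alpha>, C, \<alpha>) \<in> ESS" using CF by (simp add: ES_Some)
      moreover have "le (Some (\<alpha>, A0 \<inter> C, \<alpha>)) (Some (\<alpha>, C, \<alpha>))" using le_char[OF ne] by simp
      ultimately show ?thesis using filt_up[OF F i] by simp
    next
      assume m: "mk \<alpha> (A0 - C) \<alpha> \<in> \<xi>"
      have ne: "A0 - C \<noteq> {}"
      proof
        assume "A0 - C = {}" then have "None \<in> \<xi>" using m by (simp add: mk_def)
        then show False using filt_None[OF F] by blast
      qed
      then have "Some (\<alpha>, A0 - C, \<alpha>) \<in> \<xi>" using m by (simp add: mk_Some)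
      then have "A0 - C \<in> \<psi>" using sub by blast
      then obtain D where D: "D \<in> \<psi>" "D \<subseteq> A0 - C" "D \<subseteq> C" using C sf_dir[OF sf] by blast
      then have "D = {}" by blast
      then show ?thesis using sf_empty[OF sf] D(1) by simp
    qed
  qed
  then show "\<psi> = {A. Some (\<alpha>, A, \<alpha>) \<in> \<xi>}" using sub by blast
qed

lemma tight_ft_cond:
  assumes F: "filt \<xi>" and T: "tight Ed r s lab B \<xi>" and W: "finite_type_word \<xi> \<alpha>"
    and A: "Some (\<alpha>, A, \<alpha>) \<in> \<xi>"
  shows "infinite (out_labels Ed s lab A) \<or> (\<exists>C\<in>Bsub Ed r s lab B \<alpha>. C \<noteq> {} \<and> C \<subseteq> A \<inter> sinks Ed s)"
proof (rule ccontr)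
  assume "\<not> ?thesis"
  then have fin: "finite (out_labels Ed s lab A)"
    and nos: "\<forall>C\<in>Bsub Ed r s lab B \<alpha>. C \<noteq> {} \<longrightarrow> \<not> C \<subseteq> A \<inter> sinks Ed s" by auto
  have AB: "A \<in> B" "A \<noteq> {}" "A \<subseteq> U \<alpha>" using filt_Some[OF F A] by auto
  define f where "f a = mk (\<alpha> @ [a]) (R A [a]) (\<alpha> @ [a])" for a
  let ?Z = "f ` out_labels Ed s lab A"
  let ?x = "Some (\<alpha>, A, \<alpha>)"
  have fE: "f a \<in> ESS \<and> le (f a) ?x" for a
  proof (cases "R A [a] = {}")
    case True then show ?thesis by (simp add: f_def mk_def None_ES le_None1)
  next
    case False
    have "R A [a] \<in> B" using B_R AB by blast
    moreover have "R A [a] \<subseteq> R (U \<alpha>) [a]" by (rule RR_mono) (rule AB(3))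
    then have "R A [a] \<subseteq> U (\<alpha> @ [a])" by (simp add: RR_append)
    ultimately show ?thesis using False AB by (simp add: f_def mk_Some ES_Some le_char)
  qed
  have cov: "is_cover Ed r s lab B ?x ?Z"
    unfolding is_cover_def
  proof (intro conjI ballI impI)
    show "?Z \<subseteq> {y \<in> ESS. le y ?x}" using fE by auto
  next
    fix y assume y: "y \<in> ESS" "y \<noteq> None \<and> le y ?x"
    then obtain \<delta> D where yd: "y = Some (\<delta>, D, \<delta>)" "D \<in> B" "D \<noteq> {}" "D \<subseteq> U \<delta>"
      using ES_cases by blast
    have p: "prefix \<alpha> \<delta>" and sub: "D \<subseteq> R A (drop (length \<alpha>) \<delta>)" using y yd le_char by auto
    show "\<exists>z\<in>?Z. mul z y \<noteq> None"
    proof (cases "drop (length \<alpha>) \<delta>")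
      case Nil
      then have \<delta>\<alpha>: "\<delta> = \<alpha>" using p by (auto simp: prefix_def)
      then have DA: "D \<subseteq> A" using sub Nil by simp
      have "D \<in> Bsub Ed r s lab B \<alpha>" using yd \<delta>\<alpha> by (simp add: Bsub_RR)
      then have "\<not> D \<subseteq> A \<inter> sinks Ed s" using nos yd by blast
      then obtain v where v: "v \<in> D" "v \<notin> sinks Ed s" using DA by blast
      then obtain e where e: "e \<in> Ed" "s e = v" by (auto simp: sinks_def)
      let ?a = "lab e"
      have ea: "r e \<in> R A [?a]" "r e \<in> R D [?a]" using e v DA by (auto simp: step_def)
      have aout: "?a \<in> out_labels Ed s lab A" using e v DA by (auto simp: out_labels_def)
      have ne: "R A [?a] \<noteq> {}" using ea by blast
      have fa: "f ?a = Some (\<alpha> @ [?a], R A [?a], \<alpha> @ [?a])" using ne by (simp add: f_def mk_Some)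
      have np: "\<not> prefix (\<alpha> @ [?a]) \<alpha>" by (auto dest: prefix_length_le)
      have "mul (f ?a) y = mk (\<alpha> @ [?a]) (R A [?a] \<inter> R D [?a]) (\<alpha> @ [?a])"
        using fa yd \<delta>\<alpha> np by (simp add: mul_diag)
      also have "\<dots> \<noteq> None" using ea by (auto simp: mk_def)
      finally show ?thesis using aout by blast
    next
      case (Cons a \<gamma>)
      have \<delta>eq: "\<delta> = \<alpha> @ [a] @ \<gamma>" using p Cons by (auto simp: prefix_def)
      have "R A (drop (length \<alpha>) \<delta>) = R (R A [a]) \<gamma>"
        using Cons RR_append[of Ed r s lab A "[a]" \<gamma>] by simp
      then have sub2: "D \<subseteq> R (R A [a]) \<gamma>" using sub by simp
      have ne: "R A [a] \<noteq> {}"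
      proof
        assume "R A [a] = {}" then show False using sub2 yd(3) RR_empty[of Ed r s lab] by simp
      qed
      then have aout: "a \<in> out_labels Ed s lab A" by (auto simp: step_def out_labels_def)
      have fa: "f a = Some (\<alpha> @ [a], R A [a], \<alpha> @ [a])" using ne by (simp add: f_def mk_Some)
      have pp: "prefix (\<alpha> @ [a]) \<delta>" using \<delta>eq by simp
      have dd: "drop (length (\<alpha> @ [a])) \<delta> = \<gamma>" using \<delta>eq by simp
      have "mul (f a) y = mk \<delta> (R (R A [a]) \<gamma> \<inter> D) \<delta>" using fa yd pp dd by (simp add: mul_diag)
      also have "\<dots> \<noteq> None" using sub2 yd(3) by (auto simp: mk_def)
      finally show ?thesis using aout by blast
    qed
  qed
  have fz: "finite ?Z" using fin by simp
  have "?Z \<inter> \<xi> \<noteq> {}"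
    by (rule T[unfolded tight_def, rule_format, OF A]) (intro conjI fz cov)
  then obtain a where a: "f a \<in> \<xi>" by blast
  have "R A [a] \<noteq> {}"
  proof
    assume "R A [a] = {}" then have "None \<in> \<xi>" using a by (simp add: f_def mk_def)
    then show False using filt_None[OF F] by blast
  qed
  then have "Some (\<alpha> @ [a], R A [a], \<alpha> @ [a]) \<in> \<xi>" using a by (simp add: f_def mk_Some)
  then have "\<alpha> @ [a] \<in> filter_words \<xi>" by (auto simp: filter_words_def)
  then show False using W by (auto simp: finite_type_word_def)
qed

end
context LS begin

lemma cond_tight:
  assumes F: "filt \<xi>" and W: "finite_type_word \<xi> \<alpha>"
    and UF: "set_ultrafilter (Bsub Ed r s lab B \<alpha>) {A. Some (\<alpha>, A, \<alpha>) \<in> \<xi>}"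
    and COND: "\<forall>A\<in>{A. Some (\<alpha>, A, \<alpha>) \<in> \<xi>}. infinite (out_labels Ed s lab A) \<or>
                 (\<exists>C\<in>Bsub Ed r s lab B \<alpha>. C \<noteq> {} \<and> C \<subseteq> A \<inter> sinks Ed s)"
  shows "tight Ed r s lab B \<xi>"
  unfolding tight_def
proof (intro ballI allI impI)
  fix x Z assume x: "x \<in> \<xi>" and Z: "finite Z \<and> is_cover Ed r s lab B x Z"
  have Xs: "\<xi> \<subseteq> ESS" using filt_sub[OF F] .
  have ZE: "Z \<subseteq> ESS" using Z by (auto simp: is_cover_def)
  have cov: "\<forall>y\<in>ESS. y \<noteq> None \<and> le y x \<longrightarrow> (\<exists>z\<in>Z. mul z y \<noteq> None)" using Z by (simp add: is_cover_def)
  have fZ: "finite Z" using Z by simp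
  obtain A' where A': "Some (\<alpha>, A', \<alpha>) \<in> \<xi>" "le (Some (\<alpha>, A', \<alpha>)) x" using ft_below[OF F W x] by blast
  let ?XI = "{A. Some (\<alpha>, A, \<alpha>) \<in> \<xi>}"
  let ?F = "Bsub Ed r s lab B \<alpha>"
  have Fint: "\<forall>X\<in>?F. \<forall>Y\<in>?F. X \<inter> Y \<in> ?F" using B_Int by (auto simp: Bsub_RR)
  define P where "P z D \<longleftrightarrow> (\<forall>\<beta> C. z = Some (\<beta>, C, \<beta>) \<and> prefix \<beta> \<alpha> \<longrightarrow> D \<inter> R C (drop (length \<beta>) \<alpha>) = {})" for z D
  show "Z \<inter> \<xi> \<noteq> {}"
  proof
    assume D0: "Z \<inter> \<xi> = {}"
    have single: "\<exists>D\<in>?XI. P z D" if z: "z \<in> Z" for z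
    proof (cases "\<exists>\<beta> C. z = Some (\<beta>, C, \<beta>) \<and> prefix \<beta> \<alpha>")
      case False
      then have "P z A'" unfolding P_def by blast
      then show ?thesis using A'(1) by blast
    next
      case True
      then obtain \<beta> C where zb: "z = Some (\<beta>, C, \<beta>)" "prefix \<beta> \<alpha>" by blast
      have zE: "z \<in> ESS" "z \<notin> \<xi>" using z ZE D0 by auto
      then have CB: "C \<in> B" "C \<noteq> {}" "C \<subseteq> U \<beta>" using zb ES_Some by auto
      let ?C' = "R C (drop (length \<beta>) \<alpha>)"
      have C'B: "?C' \<in> B" using B_R CB by blast
      have "?C' \<subseteq> R (U \<beta>) (drop (length \<beta>) \<alpha>)" by (rule RR_mono) (rule CB(3))
      also have "R (U \<beta>) (drop (length \<beta>) \<alpha>) = U \<alpha>"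
        using RR_append[of Ed r s lab UNIV \<beta> "drop (length \<beta>) \<alpha>"] prefix_drop_app[OF zb(2)] by simp
      finally have C'F: "?C' \<in> ?F" using C'B by (simp add: Bsub_RR)
      have notin: "?C' \<notin> ?XI"
      proof
        assume "?C' \<in> ?XI"
        then have c1: "Some (\<alpha>, ?C', \<alpha>) \<in> \<xi>" by simp
        then have ne: "?C' \<noteq> {}" using filt_Some[OF F c1] by auto
        have "le (Some (\<alpha>, ?C', \<alpha>)) z" using zb le_char[OF ne] by simp
        then have "z \<in> \<xi>" using filt_up[OF F c1 zE(1)] by blast
        then show False using zE by blast
      qed
      have "\<not> (\<forall>D\<in>?XI. D \<inter> ?C' \<noteq> {})"
      proof
        assume "\<forall>D\<in>?XI. D \<inter> ?C' \<noteq> {}"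
        then have "?C' \<in> ?XI" using su_sep[OF UF Fint C'F] by blast
        then show False using notin by blast
      qed
      then obtain D where D: "D \<in> ?XI" "D \<inter> ?C' = {}" by blast
      have "P z D" unfolding P_def using zb D(2) by auto
      then show ?thesis using D(1) by blast
    qed
    have comb: "finite Z' \<Longrightarrow> Z' \<subseteq> Z \<Longrightarrow> \<exists>D\<in>?XI. D \<subseteq> A' \<and> (\<forall>z\<in>Z'. P z D)" for Z'
    proof (induction Z' rule: finite_induct)
      case empty show ?case using A'(1) by blast
    next
      case (insert z Z')
      then have "Z' \<subseteq> Z" "z \<in> Z" by auto
      then obtain D where D: "D \<in> ?XI" "D \<subseteq> A'" "\<forall>z\<in>Z'. P z D" using insert.IH by blast
      obtain D2 where D2: "D2 \<in> ?XI" "P z D2" using single[OF \<open>z \<in> Z\<close>] by blast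
      have I: "D \<inter> D2 \<in> ?XI" using ft_int[OF F] D(1) D2(1) by simp
      have anti: "P z' (D \<inter> D2)" if "P z' D \<or> P z' D2" for z' using that unfolding P_def by blast
      have "\<forall>z'\<in>insert z Z'. P z' (D \<inter> D2)" using anti D(3) D2(2) by blast
      moreover have "D \<inter> D2 \<subseteq> A'" using D(2) by blast
      ultimately show ?case using I by blast
    qed
    obtain D where D: "D \<in> ?XI" "D \<subseteq> A'" "\<forall>z\<in>Z. P z D" using comb[OF fZ subset_refl] by blast
    have DS: "Some (\<alpha>, D, \<alpha>) \<in> \<xi>" using D(1) by simp
    have DB: "D \<in> B" "D \<noteq> {}" "D \<subseteq> U \<alpha>" using filt_Some[OF F DS] by auto
    have A'E: "Some (\<alpha>, A', \<alpha>) \<in> ESS" and xE: "x \<in> ESS" using A'(1) x Xs by auto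
    have "infinite (out_labels Ed s lab D) \<or> (\<exists>C\<in>?F. C \<noteq> {} \<and> C \<subseteq> D \<inter> sinks Ed s)"
      using COND D(1) by blast
    then show False
    proof
      assume "\<exists>C\<in>?F. C \<noteq> {} \<and> C \<subseteq> D \<inter> sinks Ed s"
      then obtain E where E0: "E \<in> ?F" "E \<noteq> {}" "E \<subseteq> D \<inter> sinks Ed s" by blast
      then have E: "E \<in> B" "E \<subseteq> U \<alpha>" "E \<noteq> {}" "E \<subseteq> D" "E \<subseteq> sinks Ed s" by (auto simp: Bsub_RR)
      let ?y = "Some (\<alpha>, E, \<alpha>)"
      have yE: "?y \<in> ESS" using E by (simp add: ES_Some)
      have "E \<subseteq> A'" using E(4) D(2) by blast
      then have "le ?y (Some (\<alpha>, A', \<alpha>))" using le_char[OF E(3)] by simp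
      then have yx: "le ?y x" using le_trans[OF yE A'E xE _ A'(2)] by blast
      obtain z where z: "z \<in> Z" "mul z ?y \<noteq> None" using cov yE yx by blast
      have "z \<in> ESS" using z ZE by blast
      moreover have "z \<noteq> None" using z(2) by (cases z) auto
      ultimately obtain \<beta> C where zb: "z = Some (\<beta>, C, \<beta>)" using ES_cases by blast
      show False
      proof (cases "prefix \<beta> \<alpha>")
        case True
        have "P z D" using D(3) z(1) by blast
        then have "D \<inter> R C (drop (length \<beta>) \<alpha>) = {}" using zb True unfolding P_def by blast
        then have emp: "R C (drop (length \<beta>) \<alpha>) \<inter> E = {}" using E(4) by blast
        have "mul z ?y = mk (\<beta> @ drop (length \<beta>) \<alpha>) (R C (drop (length \<beta>) \<alpha>) \<inter> E) \<alpha>"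
          using zb True by (simp add: mul_diag prefix_drop_app)
        then have "mul z ?y = None" using emp by (simp add: mk_def)
        then show False using z by simp
      next
        case False
        show False
        proof (cases "prefix \<alpha> \<beta>")
          case True
          then have "drop (length \<alpha>) \<beta> \<noteq> []" using False by (auto simp: prefix_def)
          then have emp: "R E (drop (length \<alpha>) \<beta>) = {}" using RR_sinks E(5) by blast
          have "mul z ?y = mk \<beta> (C \<inter> R E (drop (length \<alpha>) \<beta>)) \<beta>"
            using zb True False by (simp add: mul_diag)
          then have "mul z ?y = None" using emp by (simp add: mk_def)
          then show False using z by simp
        next
          case f2: False
          then have "mul z ?y = None" using zb False by (simp add: mul_diag)
          then show False using z by simp
        qed
      qed
    next
      assume inf: "infinite (out_labels Ed s lab D)"
      define hd' where "hd' z = (case z of Some (\<beta>, C, \<delta>) \<Rightarrow> hd (drop (length \<alpha>) \<beta>) | None \<Rightarrow> undefined)" for z :: "('a,'v) selem"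
      have "finite (hd' ` Z)" using fZ by simp
      then have "infinite (out_labels Ed s lab D - hd' ` Z)" using inf by (simp add: Diff_infinite_finite)
      then obtain a where a: "a \<in> out_labels Ed s lab D" "a \<notin> hd' ` Z" using infinite_imp_nonempty by blast
      then obtain e where e: "e \<in> Ed" "s e \<in> D" "lab e = a" by (auto simp: out_labels_def)
      let ?Y = "R D [a]"
      have reY: "r e \<in> ?Y" using e by (auto simp: step_def)
      then have Yne: "?Y \<noteq> {}" by blast
      have YB: "?Y \<in> B" using B_R DB by blast
      have "?Y \<subseteq> R (U \<alpha>) [a]" by (rule RR_mono) (rule DB(3))
      then have YU: "?Y \<subseteq> U (\<alpha> @ [a])" by (simp add: RR_append)
      let ?y = "Some (\<alpha> @ [a], ?Y, \<alpha> @ [a])"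
      have yE: "?y \<in> ESS" using YB YU Yne by (simp add: ES_Some)
      have "?Y \<subseteq> R A' [a]" by (rule RR_mono) (rule D(2))
      then have "le ?y (Some (\<alpha>, A', \<alpha>))" using le_char[OF Yne] by simp
      then have yx: "le ?y x" using le_trans[OF yE A'E xE _ A'(2)] by blast
      obtain z where z: "z \<in> Z" "mul z ?y \<noteq> None" using cov yE yx by blast
      have "z \<in> ESS" using z ZE by blast
      moreover have "z \<noteq> None" using z(2) by (cases z) auto
      ultimately obtain \<beta> C where zb: "z = Some (\<beta>, C, \<beta>)" "C \<in> B" using ES_cases by blast
      have hz: "hd' z = hd (drop (length \<alpha>) \<beta>)" using zb by (simp add: hd'_def)
      have ha: "hd' z \<noteq> a" using a(2) z(1) by (metis image_eqI)
      show False
      proof (cases "prefix \<beta> (\<alpha> @ [a])")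
        case True
        then have "\<beta> = \<alpha> @ [a] \<or> prefix \<beta> \<alpha>" by (simp add: prefix_snoc)
        then show False
        proof
          assume "\<beta> = \<alpha> @ [a]"
          then have "hd' z = a" using hz by simp
          then show False using ha by blast
        next
          assume pb: "prefix \<beta> \<alpha>"
          let ?C' = "R C (drop (length \<beta>) \<alpha>)"
          have "P z D" using D(3) z(1) by blast
          then have PD: "D \<inter> ?C' = {}" using zb pb unfolding P_def by blast
          have lb: "length \<beta> \<le> length \<alpha>" using prefix_length_le[OF pb] .
          have dr: "drop (length \<beta>) (\<alpha> @ [a]) = drop (length \<beta>) \<alpha> @ [a]" using lb by simp
          have "R C (drop (length \<beta>) (\<alpha> @ [a])) = R ?C' [a]" unfolding dr by (simp add: RR_append)
          moreover have C'B: "?C' \<in> B" using B_R zb(2) by blast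
          moreover have e1: "R (?C' \<inter> D) [a] = R ?C' [a] \<inter> R D [a]" using R_Int[OF C'B DB(1)] .
          ultimately have "R C (drop (length \<beta>) (\<alpha> @ [a])) \<inter> ?Y = R (?C' \<inter> D) [a]"
            by simp
          also have "?C' \<inter> D = {}" using PD by blast
          finally have emp: "R C (drop (length \<beta>) (\<alpha> @ [a])) \<inter> ?Y = {}" by (metis RR_empty)
          have mz: "mul z ?y = mk (\<alpha> @ [a]) (R C (drop (length \<beta>) (\<alpha> @ [a])) \<inter> ?Y) (\<alpha> @ [a])"
            unfolding zb(1) mul_diag using True by (simp del: drop_append)
          have "mul z ?y = None" using mz emp by (metis mk_def)
          then show False using z by simp
        qed
      next
        case False
        show False
        proof (cases "prefix (\<alpha> @ [a]) \<beta>")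
          case True
          then have "hd (drop (length \<alpha>) \<beta>) = a" by (auto simp: prefix_def)
          then have "hd' z = a" using hz by simp
          then show False using ha by blast
        next
          case f2: False
          then have "mul z ?y = None" using zb False by (simp add: mul_diag)
          then show False using z by simp
        qed
      qed
    qed
  qed
qed

end

theorem mainTheorem18:
  fixes Ed :: "'e set" and r s :: "'e \<Rightarrow> 'v" and lab :: "'e \<Rightarrow> 'a"
    and B :: "'v set set" and \<xi> :: "('a,'v) selem set"
  assumes "countable (UNIV :: 'v set)" and "countable Ed"
    and "accommodating Ed r s lab B"
    and "weakly_left_resolving Ed r s lab B"
    and "closed_rel_compl B"
    and "filterE Ed r s lab B \<xi>"
  shows "tight Ed r s lab B \<xi> \<longleftrightarrow>
     ((infinite_type \<xi> \<and> ultrafilterE Ed r s lab B \<xi>) \<or>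
      (\<exists>\<alpha>. finite_type_word \<xi> \<alpha> \<and>
         set_ultrafilter (Bsub Ed r s lab B \<alpha>) (xi_at B \<xi> \<alpha> (length \<alpha>)) \<and>
         (\<forall>A\<in>xi_at B \<xi> \<alpha> (length \<alpha>).
            infinite (out_labels Ed s lab A) \<or>
            (\<exists>C\<in>Bsub Ed r s lab B \<alpha>. C \<noteq> {} \<and> C \<subseteq> A \<inter> sinks Ed s))))"
proof -
  interpret LS Ed r s lab B using assms(3-5) by unfold_locales
  have F: "filterE Ed r s lab B \<xi>" using assms(6) .
  have xi: "\<And>\<alpha>. xi_at B \<xi> \<alpha> (length \<alpha>) = {A. Some (\<alpha>, A, \<alpha>) \<in> \<xi>}" using ft_xi[OF F] by blast
  show ?thesis
  proof
    assume T: "tight Ed r s lab B \<xi>"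
    show "(infinite_type \<xi> \<and> ultrafilterE Ed r s lab B \<xi>) \<or>
      (\<exists>\<alpha>. finite_type_word \<xi> \<alpha> \<and>
         set_ultrafilter (Bsub Ed r s lab B \<alpha>) (xi_at B \<xi> \<alpha> (length \<alpha>)) \<and>
         (\<forall>A\<in>xi_at B \<xi> \<alpha> (length \<alpha>).
            infinite (out_labels Ed s lab A) \<or>
            (\<exists>C\<in>Bsub Ed r s lab B \<alpha>. C \<noteq> {} \<and> C \<subseteq> A \<inter> sinks Ed s)))"
    proof (cases "infinite_type \<xi>")
      case True
      then show ?thesis using tight_inf_ultra[OF F T True] by blast
    next
      case False
      then obtain \<alpha> where W: "finite_type_word \<xi> \<alpha>" by (auto simp: infinite_type_def)
      have U: "set_ultrafilter (Bsub Ed r s lab B \<alpha>) (xi_at B \<xi> \<alpha> (length \<alpha>))"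
        unfolding xi using tight_ft_ultra[OF F T W] .
      have C: "\<forall>A\<in>xi_at B \<xi> \<alpha> (length \<alpha>). infinite (out_labels Ed s lab A) \<or>
            (\<exists>C\<in>Bsub Ed r s lab B \<alpha>. C \<noteq> {} \<and> C \<subseteq> A \<inter> sinks Ed s)"
        unfolding xi using tight_ft_cond[OF F T W] by blast
      show ?thesis using W U C by blast
    qed
  next
    assume H: "(infinite_type \<xi> \<and> ultrafilterE Ed r s lab B \<xi>) \<or>
      (\<exists>\<alpha>. finite_type_word \<xi> \<alpha> \<and>
         set_ultrafilter (Bsub Ed r s lab B \<alpha>) (xi_at B \<xi> \<alpha> (length \<alpha>)) \<and>
         (\<forall>A\<in>xi_at B \<xi> \<alpha> (length \<alpha>).
            infinite (out_labels Ed s lab A) \<or>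
            (\<exists>C\<in>Bsub Ed r s lab B \<alpha>. C \<noteq> {} \<and> C \<subseteq> A \<inter> sinks Ed s)))"
    show "tight Ed r s lab B \<xi>"
    proof (cases "infinite_type \<xi> \<and> ultrafilterE Ed r s lab B \<xi>")
      case True
      then show ?thesis using ultra_tight by blast
    next
      case False
      then obtain \<alpha> where W: "finite_type_word \<xi> \<alpha>"
        and U: "set_ultrafilter (Bsub Ed r s lab B \<alpha>) (xi_at B \<xi> \<alpha> (length \<alpha>))"
        and C: "\<forall>A\<in>xi_at B \<xi> \<alpha> (length \<alpha>). infinite (out_labels Ed s lab A) \<or>
            (\<exists>C\<in>Bsub Ed r s lab B \<alpha>. C \<noteq> {} \<and> C \<subseteq> A \<inter> sinks Ed s)"
        using H by blast
      show ?thesis using cond_tight[OF F W U[unfolded xi] C[unfolded xi]] .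
    qed
  qed
qed

end
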